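(* If $\gamma>0$ is large enough, then almost surely, as $n\to\infty$, \[\mathbb{P}\left(\|\mathcal{X}_{T_{n+1}}\|>n^\gamma\,\middle|\,\mathbf{X}\right)=o(n^{-4/3})\quad\text{and}\quad \mathbb{P}\left(\|\mathcal{X}_{T_n}+Y_n\|>n^\gamma\,\middle|\,\mathbf{X}\right)=o(n^{-4/3}).\]
   Context: $\|\cdot\|$ is a norm on $\mathbb{R}^d$. Let $d\in\mathbb{N}$ and let $\Delta$ be a Borel random variable on $\mathbb{R}^d$; let $(\Delta_i)_{i\in\mathbb{N}}$ be independent copies of $\Delta$. Set $X_1=\Delta_1$ and for $n\ge2$ let $U_n$ be uniform on $\{1,\dots,n-1\}$ (independent) and $X_n=X_{U_n}+\Delta_n$. Let $\mathbf{X}:=((X_i)_{i\in\mathbb{N}},(U_i)_{i\ge2})$. Standing assumption: there exist $\alpha>0$ and a random variable $\Lambda$ on $\mathbb{R}^d$ with $n^{-\alpha}\sum_{i=1}^n\Delta_i\to\Lambda$ in distribution. Let $T_n:=\lfloor e^{3n^{1/3}}\rfloor$. All of the following are independent of each other and of $\mathbf{X}$: $(R_n)$ Bernoulli with parameters $(T_{n+1}-T_n)/T_{n+1}$; $(\tilde\Delta_n)$ copies of $\Delta$; $\mathcal{U}_n$ uniform on $\{1,\dots,n\}$. Set $Y_n:=R_n\tilde\Delta_n$ and $\mathcal{X}_n:=X_{\mathcal{U}_n}$. *)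

theory Defs
  imports "HOL-Probability.Probability" "HOL-Library.Landau_Symbols"
begin

text \<open>Index type for the primitive random variables of the model:
  Delta_i (i \<ge> 1), U_i (i \<ge> 2), R_n, tilde Delta_n, calligraphic U_n (n \<ge> 1).\<close>
datatype idx = IDelta nat | IU nat | IR nat | IDt nat | IUU nat

definition valid_idx :: "idx \<Rightarrow> bool" where
  "valid_idx i = (case i of IDelta k \<Rightarrow> 1 \<le> k | IU k \<Rightarrow> 2 \<le> k | IR k \<Rightarrow> 1 \<le> k
                  | IDt k \<Rightarrow> 1 \<le> k | IUU k \<Rightarrow> 1 \<le> k)"

definition events_of :: "'m measure \<Rightarrow> 'b measure \<Rightarrow> ('m \<Rightarrow> 'b) \<Rightarrow> 'm set set" where
  "events_of M N f = {f -` A \<inter> space M | A. A \<in> sets N}"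

definition T :: "nat \<Rightarrow> nat" where
  "T n = nat \<lfloor>exp (3 * real n powr (1/3))\<rfloor>"

end

theory Submission
  imports Defs "HOL-Real_Asymp.Real_Asymp"
begin

locale LS = prob_space M
  for M :: "'m measure" +
  fixes nrm :: "'a::euclidean_space \<Rightarrow> real"
    and Delta :: "nat \<Rightarrow> 'm \<Rightarrow> 'a"
    and U :: "nat \<Rightarrow> 'm \<Rightarrow> nat"
    and X :: "nat \<Rightarrow> 'm \<Rightarrow> 'a"
    and R :: "nat \<Rightarrow> 'm \<Rightarrow> bool"
    and Dt :: "nat \<Rightarrow> 'm \<Rightarrow> 'a"
    and UU :: "nat \<Rightarrow> 'm \<Rightarrow> nat"
  assumes nrm_zero: "\<And>x. nrm x = 0 \<longleftrightarrow> x = 0"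
    and nrm_triangle: "\<And>x y. nrm (x + y) \<le> nrm x + nrm y"
    and nrm_scale: "\<And>c x. nrm (c *\<^sub>R x) = \<bar>c\<bar> * nrm x"
    and Delta_meas: "\<And>i. Delta i \<in> borel_measurable M"
    and U_meas: "\<And>i. U i \<in> measurable M (count_space UNIV)"
    and R_meas: "\<And>n. R n \<in> measurable M (count_space UNIV)"
    and Dt_meas: "\<And>n. Dt n \<in> borel_measurable M"
    and UU_meas: "\<And>n. UU n \<in> measurable M (count_space UNIV)"
    and Delta_iid: "\<And>i. 1 \<le> i \<Longrightarrow> distr M borel (Delta i) = distr M borel (Delta 1)"
    and Dt_dist: "\<And>n. 1 \<le> n \<Longrightarrow> distr M borel (Dt n) = distr M borel (Delta 1)"
    and U_dist: "\<And>n. 2 \<le> n \<Longrightarrow>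
        distr M (count_space UNIV) (U n) = measure_pmf (pmf_of_set {1..n-1})"
    and U_range: "\<And>n \<omega>. 2 \<le> n \<Longrightarrow> \<omega> \<in> space M \<Longrightarrow> U n \<omega> \<in> {1..n-1}"
    and UU_dist: "\<And>n. 1 \<le> n \<Longrightarrow>
        distr M (count_space UNIV) (UU n) = measure_pmf (pmf_of_set {1..n})"
    and indep: "indep_sets
        (\<lambda>i. case i of
            IDelta k \<Rightarrow> events_of M borel (Delta k)
          | IU k \<Rightarrow> events_of M (count_space UNIV) (U k)
          | IR k \<Rightarrow> events_of M (count_space UNIV) (R k)
          | IDt k \<Rightarrow> events_of M borel (Dt k)
          | IUU k \<Rightarrow> events_of M (count_space UNIV) (UU k))
        {i. valid_idx i}"
    and X1: "\<And>\<omega>. \<omega> \<in> space M \<Longrightarrow> X 1 \<omega> = Delta 1 \<omega>"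
    and Xn: "\<And>n \<omega>. 2 \<le> n \<Longrightarrow> \<omega> \<in> space M \<Longrightarrow> X n \<omega> = X (U n \<omega>) \<omega> + Delta n \<omega>"
begin

definition EV :: "idx \<Rightarrow> 'm set set" where
  "EV i = (case i of
            IDelta k \<Rightarrow> events_of M borel (Delta k)
          | IU k \<Rightarrow> events_of M (count_space UNIV) (U k)
          | IR k \<Rightarrow> events_of M (count_space UNIV) (R k)
          | IDt k \<Rightarrow> events_of M borel (Dt k)
          | IUU k \<Rightarrow> events_of M (count_space UNIV) (UU k))"

lemma indepEV: "indep_sets EV {i. valid_idx i}"
  using indep unfolding EV_def .

definition G :: "idx set \<Rightarrow> 'm set set" where
  "G S = sigma_sets (space M) (\<Union>i\<in>S. EV i)"

lemma events_of_Int_stable: "Int_stable (events_of M N f)"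
  unfolding Int_stable_def events_of_def
proof (safe)
  fix A B assume "A \<in> sets N" "B \<in> sets N"
  then show "\<exists>C. f -` A \<inter> space M \<inter> (f -` B \<inter> space M) = f -` C \<inter> space M \<and> C \<in> sets N"
    by (intro exI[of _ "A \<inter> B"]) auto
qed

lemma EV_Int_stable: "Int_stable (EV i)"
  unfolding EV_def by (cases i) (auto simp: events_of_Int_stable)

lemma EV_events: "EV i \<subseteq> events"
proof -
  have *: "\<And>N f. f \<in> measurable M N \<Longrightarrow> events_of M N f \<subseteq> events"
    unfolding events_of_def by (auto simp: measurable_sets)
  show ?thesis unfolding EV_def
    by (cases i) (simp_all add: * Delta_meas U_meas R_meas Dt_meas UU_meas)
qed

lemma EV_space: "EV i \<subseteq> Pow (space M)"
  using EV_events sets.sets_into_space by blast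

lemma G_events: "G S \<subseteq> events"
  unfolding G_def using EV_events
  by (intro sets.sigma_sets_subset) auto

lemma G_mono: "S \<subseteq> S' \<Longrightarrow> G S \<subseteq> G S'"
  unfolding G_def by (intro sigma_sets_subseteq) auto

lemma G_gen: "i \<in> S \<Longrightarrow> A \<in> EV i \<Longrightarrow> A \<in> G S"
  unfolding G_def by auto

lemma indep2:
  assumes "S1 \<subseteq> {i. valid_idx i}" "S2 \<subseteq> {i. valid_idx i}" "S1 \<inter> S2 = {}"
    and "A \<in> G S1" "B \<in> G S2"
  shows "prob (A \<inter> B) = prob A * prob B"
proof -
  let ?I = "\<lambda>b. if b then S1 else S2"
  have "indep_sets EV (\<Union>j\<in>UNIV. ?I j)"
    by (rule indep_sets_mono_index[OF _ indepEV]) (use assms in auto)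
  then have "indep_sets (\<lambda>j. sigma_sets (space M) (\<Union>i\<in>?I j. EV i)) UNIV"
    by (rule indep_sets_collect_sigma) (use assms in \<open>auto simp: EV_Int_stable disjoint_family_on_def\<close>)
  then have "indep_set (G S1) (G S2)"
  proof -
    have "(\<lambda>j. sigma_sets (space M) (\<Union>i\<in>?I j. EV i)) = case_bool (sigma_sets (space M) (\<Union>i\<in>S1. EV i)) (sigma_sets (space M) (\<Union>i\<in>S2. EV i))"
      by (rule ext) (simp split: bool.split)
    then show ?thesis using \<open>indep_sets (\<lambda>j. sigma_sets (space M) (\<Union>i\<in>?I j. EV i)) UNIV\<close> by (simp add: indep_set_def G_def)
  qed
  then show ?thesis using assms indep_setD by blast
qed

end

context LS begin

lemma nrm_nonneg: "0 \<le> nrm x"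
proof -
  have "nrm 0 \<le> nrm x + nrm (-x)" using nrm_triangle[of x "-x"] by simp
  moreover have "nrm (-x) = nrm x" using nrm_scale[of "-1" x] by simp
  moreover have "nrm 0 = 0" using nrm_zero by simp
  ultimately show ?thesis by simp
qed

lemma nrm_minus: "nrm (-x) = nrm x"
  using nrm_scale[of "-1" x] by simp

lemma nrm_diff_le: "nrm x - nrm y \<le> nrm (x - y)"
  using nrm_triangle[of "x - y" y] by simp

lemma nrm0[simp]: "nrm 0 = 0" using nrm_zero by simp

lemma nrm_sum: "nrm (sum f A) \<le> (\<Sum>i\<in>A. nrm (f i))"
proof (induction A rule: infinite_finite_induct)
  case (insert b B) then show ?case using nrm_triangle[of "f b" "sum f B"]
    by simp
qed (auto simp: nrm0)

lemma nrm_bound: "nrm x \<le> (\<Sum>b\<in>Basis. nrm b) * norm x"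
proof -
  have "nrm x = nrm (\<Sum>b\<in>Basis. (x \<bullet> b) *\<^sub>R b)" by (simp add: euclidean_representation)
  also have "\<dots> \<le> (\<Sum>b\<in>Basis. nrm ((x \<bullet> b) *\<^sub>R b))"
    by (rule nrm_sum)
  also have "\<dots> = (\<Sum>b\<in>Basis. \<bar>x \<bullet> b\<bar> * nrm b)" by (simp add: nrm_scale)
  also have "\<dots> \<le> (\<Sum>b\<in>Basis. norm x * nrm b)"
    by (intro sum_mono mult_right_mono Basis_le_norm nrm_nonneg) auto
  finally show ?thesis by (simp add: sum_distrib_left mult.commute)
qed

lemma nrm_cont: "continuous_on UNIV nrm"
proof -
  let ?B = "(\<Sum>b\<in>Basis. nrm b) + 1"
  have B: "?B > 0" using nrm_nonneg by (smt (verit) sum_nonneg)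
  have *: "\<bar>nrm x - nrm y\<bar> \<le> ?B * norm (x - y)" for x y
  proof -
    have "nrm x - nrm y \<le> nrm (x - y)" "nrm y - nrm x \<le> nrm (y - x)" by (rule nrm_diff_le)+
    moreover have "nrm (y - x) = nrm (x - y)" using nrm_minus[of "x - y"] by simp
    moreover have "nrm (x - y) \<le> ?B * norm (x - y)" using nrm_bound[of "x - y"]
      by (smt (verit) mult_right_mono norm_ge_zero)
    ultimately show ?thesis by linarith
  qed
  show ?thesis
    unfolding continuous_on_iff
  proof (intro ballI allI impI)
    fix x :: 'a and e :: real assume "e > 0"
    show "\<exists>d>0. \<forall>x'\<in>UNIV. dist x' x < d \<longrightarrow> dist (nrm x') (nrm x) < e"
    proof (intro exI[of _ "e / ?B"] conjI ballI impI)
      show "e / ?B > 0" using B \<open>e > 0\<close> by simp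
      fix y assume "dist y x < e / ?B"
      then have "?B * norm (y - x) < e" using B by (simp add: dist_norm field_simps)
      moreover have "\<bar>nrm y - nrm x\<bar> \<le> ?B * norm (y - x)" by (rule *)
      ultimately show "dist (nrm y) (nrm x) < e" by (simp add: dist_real_def)
    qed
  qed
qed

lemma nrm_meas[measurable]: "nrm \<in> borel_measurable borel"
  by (rule borel_measurable_continuous_onI[OF nrm_cont])

definition MG :: "idx set \<Rightarrow> 'm measure" where
  "MG S = sigma (space M) (\<Union>i\<in>S. EV i)"

lemma space_MG[simp]: "space (MG S) = space M"
  unfolding MG_def using EV_space by (simp add: space_measure_of_conv)

lemma sets_MG: "sets (MG S) = G S"
  unfolding MG_def G_def using EV_space by (subst sets_measure_of) auto

lemma events_ofI: "A \<in> sets N \<Longrightarrow> f -` A \<inter> space M \<in> events_of M N f"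
  unfolding events_of_def by auto

lemma meas_MG_gen:
  assumes "\<And>A. A \<in> sets N \<Longrightarrow> f -` A \<inter> space M \<in> EV i" "i \<in> S"
    and "f \<in> space M \<rightarrow> space N"
  shows "f \<in> measurable (MG S) N"
  by (rule measurableI) (use assms G_gen in \<open>auto simp: sets_MG\<close>)

lemma Delta_MG: "IDelta k \<in> S \<Longrightarrow> Delta k \<in> borel_measurable (MG S)"
  by (rule meas_MG_gen) (auto simp: EV_def events_ofI)

lemma U_MG: "IU k \<in> S \<Longrightarrow> U k \<in> measurable (MG S) (count_space UNIV)"
  by (rule meas_MG_gen) (auto simp: EV_def events_ofI)

lemma UU_MG: "IUU k \<in> S \<Longrightarrow> UU k \<in> measurable (MG S) (count_space UNIV)"
  by (rule meas_MG_gen) (auto simp: EV_def events_ofI)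

lemma Dt_MG: "IDt k \<in> S \<Longrightarrow> Dt k \<in> borel_measurable (MG S)"
  by (rule meas_MG_gen) (auto simp: EV_def events_ofI)

lemma X_meas_gen:
  assumes sp: "space N = space M"
    and D: "\<And>k. 1 \<le> k \<Longrightarrow> k \<le> n \<Longrightarrow> Delta k \<in> borel_measurable N"
    and UM: "\<And>k. 2 \<le> k \<Longrightarrow> k \<le> n \<Longrightarrow> U k \<in> measurable N (count_space UNIV)"
    and n: "1 \<le> n"
  shows "X n \<in> borel_measurable N"
  using n D UM
proof (induction n rule: less_induct)
  case (less n)
  show ?case
  proof (cases "n = 1")
    case True
    then show ?thesis using less.prems X1 sp by (subst measurable_cong[where g="Delta 1"]) auto
  next
    case False
    then have n2: "2 \<le> n" using less.prems by auto
    have eq: "X n w = (\<Sum>k\<in>{1..<n}. (if U n w = k then X k w else 0)) + Delta n w"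
      if "w \<in> space N" for w
    proof -
      have "U n w \<in> {1..<n}" using U_range[OF n2] that sp by fastforce
      then have "(\<Sum>k\<in>{1..<n}. (if U n w = k then X k w else 0)) = X (U n w) w"
        by (simp add: sum.delta)
      then show ?thesis using Xn[OF n2] that sp by simp
    qed
    have [measurable]: "U n \<in> measurable N (count_space UNIV)" using less.prems n2 by auto
    have [measurable]: "Delta n \<in> borel_measurable N" using less.prems n2 by auto
    have [measurable]: "X k \<in> borel_measurable N" if "k \<in> {1..<n}" for k
      using that less.prems by (intro less.IH) auto
    have "(\<lambda>w. (\<Sum>k\<in>{1..<n}. (if U n w = k then X k w else 0)) + Delta n w) \<in> borel_measurable N"
      by measurable
    moreover have "\<And>w. w \<in> space N \<Longrightarrow> X n w = (\<Sum>k\<in>{1..<n}. (if U n w = k then X k w else 0)) + Delta n w"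
      by (rule eq)
    ultimately show ?thesis using measurable_cong[of N "X n" "(\<lambda>w. (\<Sum>k\<in>{1..<n}. (if U n w = k then X k w else 0)) + Delta n w)" borel] by blast
  qed
qed

lemma X_meas[measurable]: "1 \<le> n \<Longrightarrow> X n \<in> borel_measurable M"
  by (rule X_meas_gen) (auto simp: Delta_meas U_meas)

definition Sall :: "idx set" where
  "Sall = {IDelta k | k. 1 \<le> k} \<union> {IU k | k. 2 \<le> k}"

lemma Sall_valid: "Sall \<subseteq> {i. valid_idx i}"
  unfolding Sall_def valid_idx_def by auto

lemma X_MG: "1 \<le> n \<Longrightarrow> X n \<in> borel_measurable (MG Sall)"
  by (rule X_meas_gen) (auto simp: Sall_def intro!: Delta_MG U_MG)

end

primrec dge :: "(nat \<Rightarrow> 'm \<Rightarrow> nat) \<Rightarrow> nat \<Rightarrow> nat \<Rightarrow> 'm \<Rightarrow> bool" where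
  "dge U 0 n w = True"
| "dge U (Suc j) n w = (2 \<le> n \<and> dge U j (U n w) w)"

primrec badm :: "(nat \<Rightarrow> 'm \<Rightarrow> bool) \<Rightarrow> (nat \<Rightarrow> 'm \<Rightarrow> nat) \<Rightarrow> nat \<Rightarrow> nat \<Rightarrow> 'm \<Rightarrow> bool" where
  "badm Bd U 0 n w = Bd n w"
| "badm Bd U (Suc m) n w = (Bd n w \<or> (2 \<le> n \<and> badm Bd U m (U n w) w))"

lemma sum_id_real: "(\<Sum>k\<in>{1..<n}. real k) = real n * (real n - 1) / 2"
proof (induction n)
  case (Suc n)
  show ?case
  proof (cases "n = 0")
    case False
    then have "{1..<Suc n} = insert n {1..<n}" by auto
    then show ?thesis using Suc False by (simp add: field_simps)
  qed simp
qed simp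

context LS begin

definition Bd :: "real \<Rightarrow> nat \<Rightarrow> 'm \<Rightarrow> bool" where
  "Bd x n w = (nrm (Delta n w) > x)"

lemma X_bound_pointwise:
  assumes "w \<in> space M" "1 \<le> n" "0 \<le> x" "\<not> badm (Bd x) U m n w" "\<not> dge U (Suc m) n w"
  shows "nrm (X n w) \<le> (real m + 1) * x"
  using assms(2,4,5)
proof (induction m arbitrary: n)
  case 0
  then have "n = 1" by auto
  then show ?case using 0 X1[OF assms(1)] by (simp add: Bd_def)
next
  case (Suc m)
  show ?case
  proof (cases "n = 1")
    case True
    then have "nrm (X n w) \<le> x" using Suc.prems X1[OF assms(1)] by (simp add: Bd_def)
    also have "x \<le> (real (Suc m) + 1) * x" using assms(3) by (simp add: algebra_simps)
    finally show ?thesis .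
  next
    case False
    then have n2: "2 \<le> n" using Suc.prems by auto
    have u: "U n w \<in> {1..n-1}" using U_range[OF n2 assms(1)] .
    have "nrm (X (U n w) w) \<le> (real m + 1) * x"
      using Suc.prems n2 u by (intro Suc.IH) auto
    moreover have "nrm (Delta n w) \<le> x" using Suc.prems by (auto simp: Bd_def)
    moreover have "nrm (X n w) \<le> nrm (X (U n w) w) + nrm (Delta n w)"
      using Xn[OF n2 assms(1)] nrm_triangle[of "X (U n w) w" "Delta n w"] by simp
    ultimately have "nrm (X n w) \<le> (real m + 1) * x + x" by linarith
    then show ?thesis by (simp add: algebra_simps)
  qed
qed

lemma U_pred: "IU n \<in> S \<Longrightarrow> {w \<in> space M. U n w = k} \<in> sets (MG S)"
proof -
  assume "IU n \<in> S"
  then have [measurable]: "U n \<in> measurable (MG S) (count_space UNIV)" by (rule U_MG)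
  have "{w \<in> space (MG S). U n w = k} \<in> sets (MG S)" by measurable
  then show ?thesis by simp
qed

lemma dge_decomp:
  assumes "2 \<le> n"
  shows "{w \<in> space M. dge U (Suc j) n w} = (\<Union>k\<in>{1..<n}. {w \<in> space M. U n w = k} \<inter> {w \<in> space M. dge U j k w})"
  using U_range[OF assms] assms by fastforce

lemma dge_sets: "1 \<le> n \<Longrightarrow> IU ` {2..n} \<subseteq> S \<Longrightarrow> {w \<in> space M. dge U j n w} \<in> sets (MG S)"
proof (induction j arbitrary: n)
  case 0
  then show ?case using sets.top[of "MG S"] by simp
next
  case (Suc j)
  show ?case
  proof (cases "2 \<le> n")
    case True
    have "(\<Union>k\<in>{1..<n}. {w \<in> space M. U n w = k} \<inter> {w \<in> space M. dge U j k w}) \<in> sets (MG S)"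
    proof (intro sets.finite_UN ballI sets.Int)
      fix k assume k: "k \<in> {1..<n}"
      show "{w \<in> space M. U n w = k} \<in> sets (MG S)" using Suc.prems True by (intro U_pred) auto
      show "{w \<in> space M. dge U j k w} \<in> sets (MG S)" using Suc.prems k by (intro Suc.IH) auto
    qed auto
    then show ?thesis using dge_decomp[OF True] by simp
  next
    case False
    then show ?thesis by simp
  qed
qed

lemma prob_U: assumes "2 \<le> n" "k \<in> {1..n-1}" shows "prob {w \<in> space M. U n w = k} = 1 / (real n - 1)"
proof -
  have "prob {w \<in> space M. U n w = k} = measure (distr M (count_space UNIV) (U n)) {k}"
    using U_meas by (subst measure_distr) (auto simp: vimage_def Int_def conj_commute)
  also have "\<dots> = pmf (pmf_of_set {1..n-1}) k" using U_dist[OF assms(1)] by (simp add: measure_pmf_single)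
  also have "\<dots> = 1 / (real n - 1)" using assms by (simp add: of_nat_diff)
  finally show ?thesis .
qed

lemma IU_valid: "IU ` {2..n} \<subseteq> {i. valid_idx i}"
  by (auto simp: valid_idx_def)

lemma prob_dge: "1 \<le> n \<Longrightarrow> prob {w \<in> space M. dge U j n w} \<le> real n / 2 ^ j"
proof (induction j arbitrary: n)
  case 0
  then show ?case using prob_space by simp
next
  case (Suc j)
  show ?case
  proof (cases "2 \<le> n")
    case False
    then show ?thesis by simp
  next
    case True
    let ?A = "\<lambda>k. {w \<in> space M. U n w = k} \<inter> {w \<in> space M. dge U j k w}"
    have ev: "?A k \<in> events" if "k \<in> {1..<n}" for k
      using that U_pred[of n "IU ` {2..n}" k] dge_sets[of k "IU ` {2..k}" j] sets_MG G_events
      by (intro sets.Int) auto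
    have "prob {w \<in> space M. dge U (Suc j) n w} = prob (\<Union>k\<in>{1..<n}. ?A k)"
      using dge_decomp[OF True] by simp
    also have "\<dots> \<le> (\<Sum>k\<in>{1..<n}. prob (?A k))"
      using ev by (intro finite_measure_subadditive_finite) auto
    also have "\<dots> = (\<Sum>k\<in>{1..<n}. (1 / (real n - 1)) * prob {w \<in> space M. dge U j k w})"
    proof (intro sum.cong refl)
      fix k assume k: "k \<in> {1..<n}"
      have "prob (?A k) = prob {w \<in> space M. U n w = k} * prob {w \<in> space M. dge U j k w}"
      proof (rule indep2[of "{IU n}" "IU ` {2..k}"])
        show "{IU n} \<subseteq> {i. valid_idx i}" using True by (auto simp: valid_idx_def)
        show "IU ` {2..k} \<subseteq> {i. valid_idx i}" by (rule IU_valid)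
        show "{IU n} \<inter> IU ` {2..k} = {}" using k by auto
        show "{w \<in> space M. U n w = k} \<in> G {IU n}" using U_pred[of n "{IU n}" k] sets_MG by auto
        show "{w \<in> space M. dge U j k w} \<in> G (IU ` {2..k})" using dge_sets[of k "IU ` {2..k}" j] sets_MG k by auto
      qed
      then show "prob (?A k) = (1 / (real n - 1)) * prob {w \<in> space M. dge U j k w}"
        using prob_U[OF True, of k] k by auto
    qed
    also have "\<dots> \<le> (\<Sum>k\<in>{1..<n}. (1 / (real n - 1)) * (real k / 2 ^ j))"
      using True by (intro sum_mono mult_left_mono Suc.IH) auto
    also have "\<dots> = (1 / (real n - 1)) * (\<Sum>k\<in>{1..<n}. real k) / 2 ^ j"
      by (simp add: sum_distrib_left sum_divide_distrib)
    also have "\<dots> = (1 / (real n - 1)) * (real n * (real n - 1) / 2) / 2 ^ j"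
      by (simp only: sum_id_real)
    also have "\<dots> = real n / 2 ^ Suc j"
      using True by (simp add: field_simps)
    finally show ?thesis .
  qed
qed

lemma Bd_sets: "IDelta n \<in> S \<Longrightarrow> {w \<in> space M. Bd x n w} \<in> sets (MG S)"
proof -
  assume "IDelta n \<in> S"
  then have [measurable]: "Delta n \<in> borel_measurable (MG S)" by (rule Delta_MG)
  have "{w \<in> space (MG S). x < nrm (Delta n w)} \<in> sets (MG S)" by measurable
  then show ?thesis by (simp add: Bd_def)
qed

lemma badm_decomp:
  assumes "2 \<le> n"
  shows "{w \<in> space M. badm (Bd x) U (Suc m) n w} = {w \<in> space M. Bd x n w} \<union>
     (\<Union>k\<in>{1..<n}. {w \<in> space M. U n w = k} \<inter> {w \<in> space M. badm (Bd x) U m k w})"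
  using U_range[OF assms] assms by fastforce

definition SD :: "nat \<Rightarrow> idx set" where
  "SD n = IU ` {2..n} \<union> IDelta ` {1..n}"

lemma SD_valid: "SD n \<subseteq> {i. valid_idx i}"
  by (auto simp: SD_def valid_idx_def)

lemma SD_mono: "k \<le> n \<Longrightarrow> SD k \<subseteq> SD n"
  unfolding SD_def by (intro Un_mono image_mono) auto

lemma SD_Delta: "1 \<le> n \<Longrightarrow> IDelta n \<in> SD n"
  unfolding SD_def by auto

lemma SD_U: "2 \<le> n \<Longrightarrow> IU n \<in> SD n"
  unfolding SD_def by auto

lemma badm_sets: "1 \<le> n \<Longrightarrow> SD n \<subseteq> S \<Longrightarrow> {w \<in> space M. badm (Bd x) U m n w} \<in> sets (MG S)"
proof (induction m arbitrary: n)
  case 0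
  then have "IDelta n \<in> S" by (auto simp: SD_def image_subset_iff)
  then show ?case using Bd_sets[of n S x] by simp
next
  case (Suc m)
  show ?case
  proof (cases "2 \<le> n")
    case True
    have "{w \<in> space M. Bd x n w} \<union> (\<Union>k\<in>{1..<n}. {w \<in> space M. U n w = k} \<inter> {w \<in> space M. badm (Bd x) U m k w}) \<in> sets (MG S)"
    proof (rule sets.Un)
      show "{w \<in> space M. Bd x n w} \<in> sets (MG S)" using Suc.prems SD_Delta[of n] by (intro Bd_sets) blast
      have "{w \<in> space M. U n w = k} \<inter> {w \<in> space M. badm (Bd x) U m k w} \<in> sets (MG S)" if k: "k \<in> {1..<n}" for k
      proof (rule sets.Int)
        show "{w \<in> space M. U n w = k} \<in> sets (MG S)" using Suc.prems True SD_U[of n] by (intro U_pred) blast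
        have "SD k \<subseteq> S" using Suc.prems(2) SD_mono[of k n] k by auto
        then show "{w \<in> space M. badm (Bd x) U m k w} \<in> sets (MG S)" using k by (intro Suc.IH) auto
      qed
      then show "(\<Union>k\<in>{1..<n}. {w \<in> space M. U n w = k} \<inter> {w \<in> space M. badm (Bd x) U m k w}) \<in> sets (MG S)"
        by (rule sets.finite_UN[OF finite_atLeastLessThan])
    qed
    then show ?thesis using badm_decomp[OF True] by simp
  next
    case False
    have "{w \<in> space M. Bd x n w} \<in> sets (MG S)" using Suc.prems SD_Delta[of n] by (intro Bd_sets) blast
    then show ?thesis using False by simp
  qed
qed

lemma Bd_set_eq: "{w \<in> space M. Bd x n w} = Delta n -` {y. x < nrm y} \<inter> space M"
  by (auto simp: Bd_def)

lemma prob_Bd: "1 \<le> n \<Longrightarrow> prob {w \<in> space M. Bd x n w} = prob {w \<in> space M. Bd x 1 w}"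
proof -
  assume n: "1 \<le> n"
  have A: "{y. x < nrm y} \<in> sets borel" by measurable
  have "prob {w \<in> space M. Bd x n w} = measure (distr M borel (Delta n)) {y. x < nrm y}"
    using A Delta_meas by (simp add: measure_distr Bd_set_eq)
  also have "\<dots> = measure (distr M borel (Delta 1)) {y. x < nrm y}" using Delta_iid[OF n] by simp
  also have "\<dots> = prob {w \<in> space M. Bd x 1 w}"
    using A Delta_meas by (simp add: measure_distr Bd_set_eq)
  finally show ?thesis .
qed

lemma prob_badm: "1 \<le> n \<Longrightarrow> prob {w \<in> space M. badm (Bd x) U m n w} \<le> (real m + 1) * prob {w \<in> space M. Bd x 1 w}"
proof (induction m arbitrary: n)
  case 0
  then show ?case using prob_Bd[OF 0] by simp
next
  case (Suc m)
  let ?p = "prob {w \<in> space M. Bd x 1 w}"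
  show ?case
  proof (cases "2 \<le> n")
    case False
    then have "prob {w \<in> space M. badm (Bd x) U (Suc m) n w} = ?p" using prob_Bd[OF Suc.prems] by simp
    moreover have "0 \<le> ?p" by simp
    ultimately show ?thesis by (simp add: algebra_simps)
  next
    case True
    let ?A = "\<lambda>k. {w \<in> space M. U n w = k} \<inter> {w \<in> space M. badm (Bd x) U m k w}"
    have ev: "?A k \<in> events" if "k \<in> {1..<n}" for k
      using that U_pred[of n "{IU n}" k] badm_sets[of k "SD k" x m] sets_MG G_events
      by (intro sets.Int) auto
    have evB: "{w \<in> space M. Bd x n w} \<in> events"
      using Bd_sets[of n "{IDelta n}" x] sets_MG G_events by auto
    have "prob {w \<in> space M. badm (Bd x) U (Suc m) n w} = prob ({w \<in> space M. Bd x n w} \<union> (\<Union>k\<in>{1..<n}. ?A k))"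
      using badm_decomp[OF True] by simp
    also have "\<dots> \<le> prob {w \<in> space M. Bd x n w} + prob (\<Union>k\<in>{1..<n}. ?A k)"
      using ev evB by (intro measure_Un_le) auto
    finally have s1: "prob {w \<in> space M. badm (Bd x) U (Suc m) n w} \<le> prob {w \<in> space M. Bd x n w} + prob (\<Union>k\<in>{1..<n}. ?A k)" .
    have "prob (\<Union>k\<in>{1..<n}. ?A k) \<le> (\<Sum>k\<in>{1..<n}. prob (?A k))"
      using ev by (intro finite_measure_subadditive_finite) auto
    also have "\<dots> = (\<Sum>k\<in>{1..<n}. (1 / (real n - 1)) * prob {w \<in> space M. badm (Bd x) U m k w})"
    proof (intro sum.cong refl)
      fix k assume k: "k \<in> {1..<n}"
      have "prob (?A k) = prob {w \<in> space M. U n w = k} * prob {w \<in> space M. badm (Bd x) U m k w}"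
      proof (rule indep2[of "{IU n}" "SD k"])
        show "{IU n} \<subseteq> {i. valid_idx i}" using True by (auto simp: valid_idx_def)
        show "SD k \<subseteq> {i. valid_idx i}" by (rule SD_valid)
        show "{IU n} \<inter> SD k = {}" using k by (auto simp: SD_def)
        show "{w \<in> space M. U n w = k} \<in> G {IU n}" using U_pred[of n "{IU n}" k] sets_MG by auto
        show "{w \<in> space M. badm (Bd x) U m k w} \<in> G (SD k)" using badm_sets[of k "SD k" x m] sets_MG k by auto
      qed
      then show "prob (?A k) = (1 / (real n - 1)) * prob {w \<in> space M. badm (Bd x) U m k w}"
        using prob_U[OF True, of k] k by auto
    qed
    also have "\<dots> \<le> (\<Sum>k\<in>{1..<n}. (1 / (real n - 1)) * ((real m + 1) * ?p))"
      using True by (intro sum_mono mult_left_mono Suc.IH) auto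
    also have "\<dots> = real (n - 1) * ((1 / (real n - 1)) * ((real m + 1) * ?p))"
      by simp
    also have "\<dots> = (real m + 1) * ?p"
      using True by (simp add: of_nat_diff)
    finally have s2: "prob (\<Union>k\<in>{1..<n}. ?A k) \<le> (real m + 1) * ?p" .
    have "prob {w \<in> space M. Bd x n w} = ?p" by (rule prob_Bd[OF Suc.prems])
    with s1 s2 have "prob {w \<in> space M. badm (Bd x) U (Suc m) n w} \<le> ?p + (real m + 1) * ?p" by linarith
    then show ?thesis by (simp add: algebra_simps)
  qed
qed

end

lemma (in finite_measure) tendsto_measure_gt:
  assumes [measurable]: "f \<in> borel_measurable M"
  shows "(\<lambda>m::nat. measure M {w \<in> space M. f w > real m}) \<longlonglongrightarrow> 0"
proof -
  let ?A = "\<lambda>m::nat. {w \<in> space M. f w > real m}"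
  have "(\<lambda>m. measure M (?A m)) \<longlonglongrightarrow> measure M (\<Inter>i. ?A i)"
  proof (rule finite_Lim_measure_decseq)
    show "range ?A \<subseteq> sets M" by auto
    show "decseq ?A" unfolding decseq_def by auto
  qed
  moreover have "(\<Inter>i. ?A i) = {}"
  proof (safe)
    fix w assume "w \<in> (\<Inter>i. ?A i)"
    then have "f w > real (nat \<lceil>f w\<rceil>)" by blast
    then show "w \<in> {}" by linarith
  qed
  ultimately show ?thesis by simp
qed

context LS begin

lemma prob_X_big:
  assumes i: "1 \<le> i" and x: "0 \<le> x"
  shows "prob {w \<in> space M. nrm (X i w) > (real m + 1) * x} \<le> real i / 2 ^ Suc m + (real m + 1) * prob {w \<in> space M. Bd x 1 w}"
proof -
  have sub: "{w \<in> space M. nrm (X i w) > (real m + 1) * x} \<subseteq> {w \<in> space M. dge U (Suc m) i w} \<union> {w \<in> space M. badm (Bd x) U m i w}"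
  proof
    fix w assume w: "w \<in> {w \<in> space M. nrm (X i w) > (real m + 1) * x}"
    then have ws: "w \<in> space M" and big: "nrm (X i w) > (real m + 1) * x" by auto
    show "w \<in> {w \<in> space M. dge U (Suc m) i w} \<union> {w \<in> space M. badm (Bd x) U m i w}"
    proof (rule ccontr)
      assume "w \<notin> {w \<in> space M. dge U (Suc m) i w} \<union> {w \<in> space M. badm (Bd x) U m i w}"
      then have "\<not> badm (Bd x) U m i w" "\<not> dge U (Suc m) i w" using ws by auto
      from X_bound_pointwise[OF ws i x this] big show False by linarith
    qed
  qed
  have "{w \<in> space M. dge U (Suc m) i w} \<in> sets (MG (IU ` {2..i}))"
    by (rule dge_sets[OF i]) simp
  then have e1: "{w \<in> space M. dge U (Suc m) i w} \<in> events"
    using sets_MG G_events by blast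
  have "{w \<in> space M. badm (Bd x) U m i w} \<in> sets (MG (SD i))"
    by (rule badm_sets[OF i]) simp
  then have e2: "{w \<in> space M. badm (Bd x) U m i w} \<in> events"
    using sets_MG G_events by blast
  have "prob {w \<in> space M. nrm (X i w) > (real m + 1) * x} \<le> prob ({w \<in> space M. dge U (Suc m) i w} \<union> {w \<in> space M. badm (Bd x) U m i w})"
    by (rule finite_measure_mono[OF sub sets.Un[OF e1 e2]])
  also have "\<dots> \<le> prob {w \<in> space M. dge U (Suc m) i w} + prob {w \<in> space M. badm (Bd x) U m i w}"
    by (rule measure_Un_le[OF e1 e2])
  also have "\<dots> \<le> real i / 2 ^ Suc m + (real m + 1) * prob {w \<in> space M. Bd x 1 w}"
    by (rule add_mono[OF prob_dge[OF i] prob_badm[OF i]])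
  finally show ?thesis .
qed

definition Ssum :: "nat \<Rightarrow> 'm \<Rightarrow> 'a" where
  "Ssum n w = (\<Sum>i=1..n. Delta i w)"

lemma Ssum_meas[measurable]: "Ssum n \<in> borel_measurable M"
  unfolding Ssum_def using Delta_meas by measurable

lemma step_K:
  assumes conv: "\<exists>\<alpha>>0. \<exists>L :: 'a measure. prob_space L \<and> sets L = sets borel \<and>
        (\<forall>f :: 'a \<Rightarrow> real. continuous_on UNIV f \<and> bounded (range f) \<longrightarrow>
          (\<lambda>n. \<integral>\<omega>. f ((real n powr (-\<alpha>)) *\<^sub>R (\<Sum>i=1..n. Delta i \<omega>)) \<partial>M)
            \<longlonglongrightarrow> (\<integral>x. f x \<partial>L))"
  shows "\<exists>\<alpha>>0. \<exists>K N. \<forall>n\<ge>N. prob {w \<in> space M. nrm (Ssum n w) > K * real n powr \<alpha>} \<le> 1/8"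
proof -
  obtain \<alpha> L where a: "\<alpha> > 0" and L: "prob_space L" and sL: "sets L = sets borel"
    and lim: "\<And>f :: 'a \<Rightarrow> real. continuous_on UNIV f \<Longrightarrow> bounded (range f) \<Longrightarrow>
          (\<lambda>n. \<integral>\<omega>. f ((real n powr (-\<alpha>)) *\<^sub>R (\<Sum>i=1..n. Delta i \<omega>)) \<partial>M)
            \<longlonglongrightarrow> (\<integral>x. f x \<partial>L)"
    using conv by blast
  interpret L: prob_space L by (rule L)
  have nrmL[measurable]: "nrm \<in> borel_measurable L"
    using nrm_meas measurable_cong_sets[OF sL refl] by blast
  have "(\<lambda>m::nat. L.prob {y \<in> space L. nrm y > real m}) \<longlonglongrightarrow> 0"
    by (rule L.tendsto_measure_gt[OF nrmL])
  then have "eventually (\<lambda>m. L.prob {y \<in> space L. nrm y > real m} < 1/32) sequentially"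
    by (rule order_tendstoD) simp
  then obtain m0 where m0: "L.prob {y \<in> space L. nrm y > real m0} < 1/32"
    by (auto simp: eventually_sequentially)
  define K0 where "K0 = real m0"
  define f where "f y = min 1 (max 0 (nrm y - K0))" for y
  have fc: "continuous_on UNIV f" unfolding f_def
    by (intro continuous_intros continuous_on_compose2[OF nrm_cont]) auto
  have f01: "0 \<le> f y" "f y \<le> 1" for y unfolding f_def by auto
  have fb: "bounded (range f)" using f01 unfolding bounded_iff
    by (intro exI[of _ 1]) auto
  have fmeas[measurable]: "f \<in> borel_measurable borel" using fc by (rule borel_measurable_continuous_onI)
  have "(\<integral>y. f y \<partial>L) \<le> (\<integral>y. indicator {y \<in> space L. nrm y > K0} y \<partial>L)"
  proof (rule integral_mono)
    show "integrable L f"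
      using fmeas f01 by (intro L.integrable_const_bound[where B=1]) (auto simp: measurable_cong_sets[OF sL refl])
    show "integrable L (indicator {y \<in> space L. nrm y > K0} :: 'a \<Rightarrow> real)"
      by (intro L.integrable_const_bound[where B=1]) auto
    show "f y \<le> indicator {y \<in> space L. nrm y > K0} y" if "y \<in> space L" for y
      using f01[of y] that by (auto simp: f_def indicator_def)
  qed
  also have "\<dots> = L.prob {y \<in> space L. nrm y > K0}" by simp
  finally have intL: "(\<integral>y. f y \<partial>L) < 1/32" using m0 K0_def by simp
  have "eventually (\<lambda>n. (\<integral>\<omega>. f ((real n powr (-\<alpha>)) *\<^sub>R (\<Sum>i=1..n. Delta i \<omega>)) \<partial>M) < 1/32) sequentially"
    using lim[OF fc fb] intL by (rule order_tendstoD)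
  then obtain N where N: "\<And>n. n \<ge> N \<Longrightarrow> (\<integral>\<omega>. f ((real n powr (-\<alpha>)) *\<^sub>R (\<Sum>i=1..n. Delta i \<omega>)) \<partial>M) < 1/32"
    by (auto simp: eventually_sequentially)
  have "prob {w \<in> space M. nrm (Ssum n w) > (K0 + 1) * real n powr \<alpha>} \<le> 1/8" if n: "n \<ge> max N 1" for n
  proof -
    let ?g = "\<lambda>\<omega>. f ((real n powr (-\<alpha>)) *\<^sub>R (\<Sum>i=1..n. Delta i \<omega>))"
    have pos: "real n powr \<alpha> > 0" using n by simp
    have "prob {w \<in> space M. nrm (Ssum n w) > (K0 + 1) * real n powr \<alpha>} =
          (\<integral>w. indicator {w \<in> space M. nrm (Ssum n w) > (K0 + 1) * real n powr \<alpha>} w \<partial>M)" by simp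
    also have "\<dots> \<le> (\<integral>w. ?g w \<partial>M)"
    proof (rule integral_mono)
      show "integrable M (indicator {w \<in> space M. nrm (Ssum n w) > (K0 + 1) * real n powr \<alpha>} :: 'm \<Rightarrow> real)"
        by (intro integrable_const_bound[where B=1]) auto
      have [measurable]: "\<And>i. Delta i \<in> borel_measurable M" by (rule Delta_meas)
      have "?g \<in> borel_measurable M" by measurable
      then show "integrable M ?g"
        using f01 by (intro integrable_const_bound[where B=1]) auto
      fix w assume "w \<in> space M"
      show "indicator {w \<in> space M. nrm (Ssum n w) > (K0 + 1) * real n powr \<alpha>} w \<le> ?g w"
      proof (cases "nrm (Ssum n w) > (K0 + 1) * real n powr \<alpha>")
        case True
        have "nrm ((real n powr (-\<alpha>)) *\<^sub>R (\<Sum>i=1..n. Delta i w)) = real n powr (-\<alpha>) * nrm (Ssum n w)"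
          by (simp add: nrm_scale Ssum_def)
        also have "\<dots> > real n powr (-\<alpha>) * ((K0 + 1) * real n powr \<alpha>)"
          using True pos by (intro mult_strict_left_mono) auto
        also have "real n powr (-\<alpha>) * ((K0 + 1) * real n powr \<alpha>) = K0 + 1"
          using pos by (simp add: powr_minus field_simps)
        finally have "?g w = 1" unfolding f_def by simp
        then show ?thesis by (simp add: indicator_def)
      next
        case False
        then show ?thesis using f01 by (simp add: indicator_def)
      qed
    qed
    also have "\<dots> \<le> 1/8" using N[of n] n by simp
    finally show ?thesis .
  qed
  then show ?thesis using a by blast
qed

end

context LS begin

lemma uniform_K:
  assumes a: "\<alpha> > 0" and KN: "\<And>n. n \<ge> N \<Longrightarrow> prob {w \<in> space M. nrm (Ssum n w) > K * real n powr \<alpha>} \<le> 1/8"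
  shows "\<exists>K'>0. \<forall>n\<ge>1. \<forall>k\<le>n. prob {w \<in> space M. nrm (Ssum k w) > K' * real n powr \<alpha>} \<le> 1/8"
proof -
  have "\<forall>k\<in>{..<N}. eventually (\<lambda>m. prob {w \<in> space M. nrm (Ssum k w) > real m} < 1/8) sequentially"
  proof
    fix k
    have [measurable]: "(\<lambda>w. nrm (Ssum k w)) \<in> borel_measurable M" by measurable
    have "(\<lambda>m::nat. prob {w \<in> space M. nrm (Ssum k w) > real m}) \<longlonglongrightarrow> 0"
      by (rule tendsto_measure_gt) measurable
    then show "eventually (\<lambda>m. prob {w \<in> space M. nrm (Ssum k w) > real m} < 1/8) sequentially"
      by (rule order_tendstoD) simp
  qed
  then have "eventually (\<lambda>m. \<forall>k\<in>{..<N}. prob {w \<in> space M. nrm (Ssum k w) > real m} < 1/8) sequentially"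
    by (intro eventually_ball_finite) auto
  then obtain m0 where m0: "\<And>k. k < N \<Longrightarrow> prob {w \<in> space M. nrm (Ssum k w) > real m0} < 1/8"
    by (auto simp: eventually_sequentially)
  define K' where "K' = max (max K (real m0)) 1"
  have K'pos: "K' > 0" unfolding K'_def by simp
  have "prob {w \<in> space M. nrm (Ssum k w) > K' * real n powr \<alpha>} \<le> 1/8" if n: "n \<ge> 1" "k \<le> n" for n k
  proof (cases "k < N")
    case True
    have "1 \<le> real n powr \<alpha>" using n a by (intro ge_one_powr_ge_zero) auto
    then have "real m0 \<le> K' * real n powr \<alpha>" unfolding K'_def
      by (smt (verit, best) mult_le_cancel_left1)
    then have "prob {w \<in> space M. nrm (Ssum k w) > K' * real n powr \<alpha>} \<le> prob {w \<in> space M. nrm (Ssum k w) > real m0}"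
      by (intro finite_measure_mono) auto
    then show ?thesis using m0[OF True] by simp
  next
    case False
    then have kN: "k \<ge> N" by simp
    show ?thesis
    proof (cases "k = 0")
      case True
      have "0 \<le> K' * real n powr \<alpha>" using K'pos by simp
      then have "{w \<in> space M. nrm (Ssum k w) > K' * real n powr \<alpha>} = {}" using True by (auto simp: Ssum_def)
      then show ?thesis by (simp only:) simp
    next
      case False
      have "K * real k powr \<alpha> \<le> K' * real k powr \<alpha>" unfolding K'_def
        by (intro mult_right_mono) auto
      also have "\<dots> \<le> K' * real n powr \<alpha>"
        using n a K'pos by (intro mult_left_mono powr_mono2) auto
      finally have "prob {w \<in> space M. nrm (Ssum k w) > K' * real n powr \<alpha>} \<le> prob {w \<in> space M. nrm (Ssum k w) > K * real k powr \<alpha>}"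
        by (intro finite_measure_mono) auto
      then show ?thesis using KN[OF kN] by simp
    qed
  qed
  then show ?thesis using K'pos by blast
qed

lemma Dsum_MG:
  assumes "\<And>i. i \<in> I \<Longrightarrow> IDelta i \<in> S"
  shows "(\<lambda>w. \<Sum>i\<in>I. Delta i w) \<in> borel_measurable (MG S)"
  by (rule borel_measurable_sum) (use assms Delta_MG in blast)

lemma nrm_gt_sets:
  assumes "f \<in> borel_measurable (MG S)"
  shows "{w \<in> space M. c < nrm (f w)} \<in> sets (MG S)" "{w \<in> space M. nrm (f w) \<le> c} \<in> sets (MG S)"
proof -
  have [measurable]: "f \<in> borel_measurable (MG S)" by fact
  have "{w \<in> space (MG S). c < nrm (f w)} \<in> sets (MG S)" by measurable
  then show "{w \<in> space M. c < nrm (f w)} \<in> sets (MG S)" by simp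
  have "{w \<in> space (MG S). nrm (f w) \<le> c} \<in> sets (MG S)" by measurable
  then show "{w \<in> space M. nrm (f w) \<le> c} \<in> sets (MG S)" by simp
qed

lemma MG_events: "A \<in> sets (MG S) \<Longrightarrow> A \<in> events"
  using sets_MG G_events by blast

lemma IDelta_valid: "IDelta ` I \<subseteq> {i. valid_idx i} \<longleftrightarrow> (\<forall>i\<in>I. 1 \<le> i)"
  by (auto simp: valid_idx_def)

lemma nrm_diff_tri: "nrm (a - b) \<le> nrm a + nrm b"
  using nrm_triangle[of a "-b"] nrm_minus[of b] by simp

lemma Ssum_split: "k \<le> n \<Longrightarrow> Ssum n w = Ssum k w + (\<Sum>i\<in>{k<..n}. Delta i w)"
proof -
  assume k: "k \<le> n"
  have "{1..n} = {1..k} \<union> {k<..n}" using k by auto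
  moreover have "{1..k} \<inter> {k<..n} = {}" by auto
  ultimately show ?thesis unfolding Ssum_def by (simp add: sum.union_disjoint)
qed

lemma ottaviani:
  assumes t: "t > 0" and n: "n \<ge> 1"
    and small: "\<And>k. k \<le> n \<Longrightarrow> prob {w \<in> space M. nrm (Ssum k w) > t} \<le> 1/8"
  shows "prob {w \<in> space M. \<exists>k\<in>{1..n}. nrm (Ssum k w) > 3 * t} \<le> 1/6"
proof -
  define A where "A k = {w \<in> space M. 3 * t < nrm (Ssum k w)} - (\<Union>j\<in>{1..<k}. {w \<in> space M. 3 * t < nrm (Ssum j w)})" for k
  define R where "R k w = (\<Sum>i\<in>{k<..n}. Delta i w)" for k w
  define B where "B k = {w \<in> space M. nrm (R k w) \<le> 2 * t}" for k
  have Ssum_MG: "Ssum k \<in> borel_measurable (MG (IDelta ` {1..k}))" for k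
    unfolding Ssum_def by (rule Dsum_MG) auto
  have A_sets: "A k \<in> sets (MG (IDelta ` {1..k}))" for k
    unfolding A_def
  proof (intro sets.Diff sets.finite_UN[OF finite_atLeastLessThan])
    show "{w \<in> space M. 3 * t < nrm (Ssum k w)} \<in> sets (MG (IDelta ` {1..k}))"
      by (rule nrm_gt_sets(1)[OF Ssum_MG])
    fix j assume j: "j \<in> {1..<k}"
    have "Ssum j \<in> borel_measurable (MG (IDelta ` {1..k}))"
      unfolding Ssum_def by (rule Dsum_MG) (use j in auto)
    then show "{w \<in> space M. 3 * t < nrm (Ssum j w)} \<in> sets (MG (IDelta ` {1..k}))"
      by (rule nrm_gt_sets(1))
  qed
  have B_sets: "B k \<in> sets (MG (IDelta ` {k<..n}))" for k
    unfolding B_def R_def by (intro nrm_gt_sets(2) Dsum_MG) auto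
  have Aev: "A k \<in> events" for k using A_sets MG_events by blast
  have Bev: "B k \<in> events" for k using B_sets MG_events by blast
  have disj: "disjoint_family_on A {1..n}"
    unfolding disjoint_family_on_def
  proof (intro ballI impI)
    fix k j assume kj: "k \<in> {1..n}" "j \<in> {1..n}" "k \<noteq> j"
    show "A k \<inter> A j = {}"
    proof (cases "k < j")
      case True then show ?thesis using kj unfolding A_def by auto
    next
      case False then have "j < k" using kj by auto
      then show ?thesis using kj unfolding A_def by auto
    qed
  qed
  have union: "(\<Union>k\<in>{1..n}. A k) = {w \<in> space M. \<exists>k\<in>{1..n}. nrm (Ssum k w) > 3 * t}"
  proof
    show "(\<Union>k\<in>{1..n}. A k) \<subseteq> {w \<in> space M. \<exists>k\<in>{1..n}. nrm (Ssum k w) > 3 * t}"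
      unfolding A_def by auto
    show "{w \<in> space M. \<exists>k\<in>{1..n}. nrm (Ssum k w) > 3 * t} \<subseteq> (\<Union>k\<in>{1..n}. A k)"
    proof
      fix w assume "w \<in> {w \<in> space M. \<exists>k\<in>{1..n}. nrm (Ssum k w) > 3 * t}"
      then have w: "w \<in> space M" and ex: "\<exists>k. k \<in> {1..n} \<and> nrm (Ssum k w) > 3 * t" by auto
      define k0 where "k0 = (LEAST k. k \<in> {1..n} \<and> nrm (Ssum k w) > 3 * t)"
      have k0: "k0 \<in> {1..n} \<and> nrm (Ssum k0 w) > 3 * t"
        unfolding k0_def using ex by (rule LeastI_ex)
      have "\<not> (j \<in> {1..n} \<and> nrm (Ssum j w) > 3 * t)" if "j < k0" for j
        using not_less_Least[of j "\<lambda>k. k \<in> {1..n} \<and> nrm (Ssum k w) > 3 * t"] that unfolding k0_def by blast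
      then have "w \<in> A k0" unfolding A_def using w k0 by auto
      then show "w \<in> (\<Union>k\<in>{1..n}. A k)" using k0 by blast
    qed
  qed
  have AB_sub: "A k \<inter> B k \<subseteq> {w \<in> space M. nrm (Ssum n w) > t}" if k: "k \<in> {1..n}" for k
  proof
    fix w assume "w \<in> A k \<inter> B k"
    then have w: "w \<in> space M" and a: "3 * t < nrm (Ssum k w)" and b: "nrm (R k w) \<le> 2 * t"
      unfolding A_def B_def by auto
    have "Ssum k w = Ssum n w - R k w" using Ssum_split[of k n w] k unfolding R_def by simp
    then have "nrm (Ssum k w) \<le> nrm (Ssum n w) + nrm (R k w)" using nrm_diff_tri by metis
    then show "w \<in> {w \<in> space M. nrm (Ssum n w) > t}" using a b w by auto
  qed
  have probB: "prob (B k) \<ge> 3/4" if k: "k \<in> {1..n}" for k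
  proof -
    have "space M - B k \<subseteq> {w \<in> space M. nrm (Ssum n w) > t} \<union> {w \<in> space M. nrm (Ssum k w) > t}"
    proof
      fix w assume "w \<in> space M - B k"
      then have w: "w \<in> space M" and b: "nrm (R k w) > 2 * t" unfolding B_def by auto
      have "R k w = Ssum n w - Ssum k w" using Ssum_split[of k n w] k unfolding R_def by simp
      then have "nrm (R k w) \<le> nrm (Ssum n w) + nrm (Ssum k w)" using nrm_diff_tri by metis
      then show "w \<in> {w \<in> space M. nrm (Ssum n w) > t} \<union> {w \<in> space M. nrm (Ssum k w) > t}"
        using b w by auto
    qed
    then have "prob (space M - B k) \<le> prob ({w \<in> space M. nrm (Ssum n w) > t} \<union> {w \<in> space M. nrm (Ssum k w) > t})"
      by (rule finite_measure_mono) measurable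
    also have "\<dots> \<le> prob {w \<in> space M. nrm (Ssum n w) > t} + prob {w \<in> space M. nrm (Ssum k w) > t}"
      by (rule measure_Un_le) measurable
    also have "\<dots> \<le> 1/8 + 1/8" using small[of n] small[of k] k by (intro add_mono) auto
    finally have "prob (space M - B k) \<le> 1/4" by simp
    then show ?thesis using prob_compl[OF Bev[of k]] by simp
  qed
  have "(\<Sum>k\<in>{1..n}. prob (A k) * (3/4)) \<le> (\<Sum>k\<in>{1..n}. prob (A k \<inter> B k))"
  proof (rule sum_mono)
    fix k assume k: "k \<in> {1..n}"
    have "prob (A k \<inter> B k) = prob (A k) * prob (B k)"
    proof (rule indep2[OF _ _ _ _ _])
      show "IDelta ` {1..k} \<subseteq> {i. valid_idx i}" "IDelta ` {k<..n} \<subseteq> {i. valid_idx i}"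
        by (auto simp: valid_idx_def)
      show "IDelta ` {1..k} \<inter> IDelta ` {k<..n} = {}" by auto
      show "A k \<in> G (IDelta ` {1..k})" using A_sets sets_MG by blast
      show "B k \<in> G (IDelta ` {k<..n})" using B_sets sets_MG by blast
    qed
    then show "prob (A k) * (3/4) \<le> prob (A k \<inter> B k)"
      using probB[OF k] mult_left_mono[of "3/4" "prob (B k)" "prob (A k)"] by simp
  qed
  also have "\<dots> = prob (\<Union>k\<in>{1..n}. A k \<inter> B k)"
  proof (rule finite_measure_finite_Union[symmetric])
    show "finite {1..n}" by simp
    show "(\<lambda>k. A k \<inter> B k) ` {1..n} \<subseteq> events" using Aev Bev by blast
    show "disjoint_family_on (\<lambda>k. A k \<inter> B k) {1..n}"
      using disj unfolding disjoint_family_on_def by blast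
  qed
  also have "\<dots> \<le> prob {w \<in> space M. nrm (Ssum n w) > t}"
  proof (rule finite_measure_mono)
    show "(\<Union>k\<in>{1..n}. A k \<inter> B k) \<subseteq> {w \<in> space M. nrm (Ssum n w) > t}"
      using AB_sub by (intro UN_least) blast
  qed measurable
  also have "\<dots> \<le> 1/8" by (rule small) simp
  finally have s0: "(\<Sum>k\<in>{1..n}. prob (A k) * (3/4)) \<le> 1/8" .
  have s: "(\<Sum>k\<in>{1..n}. prob (A k)) * (3/4) \<le> 1/8" using s0 by (metis sum_distrib_right)
  have "prob (\<Union>k\<in>{1..n}. A k) = (\<Sum>k\<in>{1..n}. prob (A k))"
    using Aev disj by (intro finite_measure_finite_Union) auto
  then show ?thesis using union s by simp
qed

end

lemma bernoulli_upper:
  fixes p :: real assumes "0 \<le> p" "p \<le> 1"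
  shows "(1 - p) ^ n * (1 + real n * p) \<le> 1"
proof (induction n)
  case (Suc n)
  have a: "0 \<le> (1 - p) ^ n" using assms by simp
  have "(1 - p) * (1 + real (Suc n) * p) \<le> 1 + real n * p"
    using assms by (simp add: algebra_simps)
  then have "(1 - p) ^ n * ((1 - p) * (1 + real (Suc n) * p)) \<le> (1 - p) ^ n * (1 + real n * p)"
    by (rule mult_left_mono[OF _ a])
  moreover have "(1 - p) ^ Suc n * (1 + real (Suc n) * p) = (1 - p) ^ n * ((1 - p) * (1 + real (Suc n) * p))"
    by (simp add: mult_ac)
  ultimately have "(1 - p) ^ Suc n * (1 + real (Suc n) * p) \<le> (1 - p) ^ n * (1 + real n * p)" by (simp only:)
  then show ?case using Suc by linarith
qed simp

context LS begin

lemma Bd_compl: "{w \<in> space M. nrm (Delta k w) \<le> s} = space M - {w \<in> space M. Bd s k w}"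
  by (auto simp: Bd_def)

lemma Bd_ev: "{w \<in> space M. Bd s k w} \<in> events"
  using Bd_sets[of k "{IDelta k}" s] MG_events by blast

lemma delta_max:
  assumes t: "t > 0" and n: "n \<ge> 1"
    and small: "\<And>k. k \<le> n \<Longrightarrow> prob {w \<in> space M. nrm (Ssum k w) > t} \<le> 1/8"
  shows "real n * prob {w \<in> space M. Bd (6 * t) 1 w} \<le> 1/5"
proof -
  let ?p = "prob {w \<in> space M. Bd (6 * t) 1 w}"
  have [measurable]: "\<And>k. Delta k \<in> borel_measurable M" by (rule Delta_meas)
  have sub: "{w \<in> space M. \<exists>k\<in>{1..n}. nrm (Delta k w) > 6 * t} \<subseteq> {w \<in> space M. \<exists>k\<in>{1..n}. nrm (Ssum k w) > 3 * t}"
  proof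
    fix w assume "w \<in> {w \<in> space M. \<exists>k\<in>{1..n}. nrm (Delta k w) > 6 * t}"
    then obtain k where w: "w \<in> space M" and k: "k \<in> {1..n}" and big: "nrm (Delta k w) > 6 * t" by auto
    have "{k - 1<..k} = {k}" using k by auto
    then have "Ssum k w = Ssum (k - 1) w + Delta k w" using Ssum_split[of "k - 1" k w] by simp
    then have "Delta k w = Ssum k w - Ssum (k - 1) w" by (simp add: algebra_simps)
    then have "nrm (Delta k w) \<le> nrm (Ssum k w) + nrm (Ssum (k - 1) w)" using nrm_diff_tri by metis
    then consider "nrm (Ssum k w) > 3 * t" | "nrm (Ssum (k - 1) w) > 3 * t" using big by linarith
    then show "w \<in> {w \<in> space M. \<exists>k\<in>{1..n}. nrm (Ssum k w) > 3 * t}"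
    proof cases
      case 1 then show ?thesis using w k by auto
    next
      case 2
      then have "k - 1 \<noteq> 0" using t by (auto simp: Ssum_def)
      then have "k - 1 \<in> {1..n}" using k by auto
      then show ?thesis using w 2 by auto
    qed
  qed
  have "prob {w \<in> space M. \<exists>k\<in>{1..n}. nrm (Delta k w) > 6 * t} \<le> prob {w \<in> space M. \<exists>k\<in>{1..n}. nrm (Ssum k w) > 3 * t}"
    by (rule finite_measure_mono[OF sub]) measurable
  also have "\<dots> \<le> 1/6" by (rule ottaviani[OF t n small])
  finally have p1: "prob {w \<in> space M. \<exists>k\<in>{1..n}. nrm (Delta k w) > 6 * t} \<le> 1/6" .
  define Aj where "Aj j = (case j of IDelta k \<Rightarrow> {w \<in> space M. nrm (Delta k w) \<le> 6 * t} | _ \<Rightarrow> {})" for j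
  have "prob (\<Inter>j\<in>IDelta ` {1..n}. Aj j) = (\<Prod>j\<in>IDelta ` {1..n}. prob (Aj j))"
  proof (rule indep_setsD[OF indepEV])
    show "IDelta ` {1..n} \<subseteq> {i. valid_idx i}" by (auto simp: valid_idx_def)
    show "IDelta ` {1..n} \<noteq> {}" using n by auto
    show "finite (IDelta ` {1..n})" by simp
    show "\<forall>j\<in>IDelta ` {1..n}. Aj j \<in> EV j"
    proof
      fix j assume "j \<in> IDelta ` {1..n}"
      then obtain k where j: "j = IDelta k" by auto
      have "Delta k -` {y. nrm y \<le> 6 * t} \<inter> space M \<in> events_of M borel (Delta k)"
        by (rule events_ofI) measurable
      moreover have "Delta k -` {y. nrm y \<le> 6 * t} \<inter> space M = {w \<in> space M. nrm (Delta k w) \<le> 6 * t}" by auto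
      ultimately show "Aj j \<in> EV j" unfolding Aj_def EV_def j by simp
    qed
  qed
  moreover have "(\<Inter>j\<in>IDelta ` {1..n}. Aj j) = space M - {w \<in> space M. \<exists>k\<in>{1..n}. nrm (Delta k w) > 6 * t}"
    using n by (auto simp: Aj_def not_less) (meson atLeastAtMost_iff linorder_not_le)
  moreover have "(\<Prod>j\<in>IDelta ` {1..n}. prob (Aj j)) = (1 - ?p) ^ n"
  proof -
    have "(\<Prod>j\<in>IDelta ` {1..n}. prob (Aj j)) = (\<Prod>k\<in>{1..n}. prob (Aj (IDelta k)))"
      by (subst prod.reindex) (auto simp: inj_on_def)
    also have "\<dots> = (\<Prod>k\<in>{1..n}. 1 - ?p)"
    proof (rule prod.cong[OF refl])
      fix k assume k: "k \<in> {1..n}"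
      have "prob (Aj (IDelta k)) = prob (space M - {w \<in> space M. Bd (6 * t) k w})"
        unfolding Aj_def using Bd_compl by simp
      also have "\<dots> = 1 - prob {w \<in> space M. Bd (6 * t) k w}" by (rule prob_compl[OF Bd_ev])
      also have "\<dots> = 1 - ?p" using prob_Bd[of k "6 * t"] k by simp
      finally show "prob (Aj (IDelta k)) = 1 - ?p" .
    qed
    finally show ?thesis by simp
  qed
  ultimately have "(1 - ?p) ^ n = prob (space M - {w \<in> space M. \<exists>k\<in>{1..n}. nrm (Delta k w) > 6 * t})" by simp
  also have "\<dots> = 1 - prob {w \<in> space M. \<exists>k\<in>{1..n}. nrm (Delta k w) > 6 * t}"
    by (rule prob_compl) measurable
  finally have q: "(1 - ?p) ^ n \<ge> 5/6" using p1 by simp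
  have "(1 - ?p) ^ n * (1 + real n * ?p) \<le> 1" by (rule bernoulli_upper) auto
  then have "5/6 * (1 + real n * ?p) \<le> 1"
    using q by (smt (verit) mult_right_mono measure_nonneg of_nat_0_le_iff mult_nonneg_nonneg)
  then show ?thesis by simp
qed

lemma Bd_mono_prob: "x \<le> y \<Longrightarrow> prob {w \<in> space M. Bd y 1 w} \<le> prob {w \<in> space M. Bd x 1 w}"
  by (rule finite_measure_mono[OF _ Bd_ev]) (auto simp: Bd_def)

lemma tail_bound:
  assumes conv: "\<exists>\<alpha>>0. \<exists>L :: 'a measure. prob_space L \<and> sets L = sets borel \<and>
        (\<forall>f :: 'a \<Rightarrow> real. continuous_on UNIV f \<and> bounded (range f) \<longrightarrow>
          (\<lambda>n. \<integral>\<omega>. f ((real n powr (-\<alpha>)) *\<^sub>R (\<Sum>i=1..n. Delta i \<omega>)) \<partial>M)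
            \<longlonglongrightarrow> (\<integral>x. f x \<partial>L))"
  shows "\<exists>C \<beta> x0. \<beta> > 0 \<and> x0 > 0 \<and> (\<forall>x\<ge>x0. prob {w \<in> space M. Bd x 1 w} \<le> C * x powr (-\<beta>))"
proof -
  obtain \<alpha> K N where a: "\<alpha> > 0" and KN: "\<And>n. n \<ge> N \<Longrightarrow> prob {w \<in> space M. nrm (Ssum n w) > K * real n powr \<alpha>} \<le> 1/8"
    using step_K[OF conv] by blast
  obtain K' where K': "K' > 0" and sm: "\<And>n k. n \<ge> 1 \<Longrightarrow> k \<le> n \<Longrightarrow> prob {w \<in> space M. nrm (Ssum k w) > K' * real n powr \<alpha>} \<le> 1/8"
    using uniform_K[OF a KN] by blast
  define c0 where "c0 = 6 * K'"
  have c0: "c0 > 0" using K' by (simp add: c0_def)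
  have pn: "prob {w \<in> space M. Bd (c0 * real n powr \<alpha>) 1 w} \<le> 1 / real n" if n: "n \<ge> 1" for n
  proof -
    have t: "K' * real n powr \<alpha> > 0" using K' n by simp
    have "real n * prob {w \<in> space M. Bd (6 * (K' * real n powr \<alpha>)) 1 w} \<le> 1/5"
      by (rule delta_max[OF t n]) (rule sm[OF n])
    then have "real n * prob {w \<in> space M. Bd (c0 * real n powr \<alpha>) 1 w} \<le> 1"
      by (simp add: c0_def mult.assoc)
    then show ?thesis using n by (simp add: field_simps)
  qed
  define C where "C = 2 * c0 powr (1 / \<alpha>)"
  have "prob {w \<in> space M. Bd x 1 w} \<le> C * x powr (-(1 / \<alpha>))" if x: "x \<ge> c0" for x
  proof -
    define y where "y = (x / c0) powr (1 / \<alpha>)"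
    have xc: "x / c0 \<ge> 1" using x c0 by simp
    have y1: "y \<ge> 1" unfolding y_def using xc a by (intro ge_one_powr_ge_zero) auto
    define n where "n = nat \<lfloor>y\<rfloor>"
    have n1: "n \<ge> 1" unfolding n_def using y1 by linarith
    have ny: "real n \<le> y" "y < real n + 1" unfolding n_def using y1 by linarith+
    have "real n powr \<alpha> \<le> y powr \<alpha>" using ny a by (intro powr_mono2) auto
    also have "y powr \<alpha> = x / c0" unfolding y_def using a xc c0 x by (simp add: powr_powr)
    finally have "c0 * real n powr \<alpha> \<le> x" using c0 by (simp add: field_simps)
    then have "prob {w \<in> space M. Bd x 1 w} \<le> prob {w \<in> space M. Bd (c0 * real n powr \<alpha>) 1 w}"
      by (rule Bd_mono_prob)
    also have "\<dots> \<le> 1 / real n" by (rule pn[OF n1])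
    also have "\<dots> \<le> 2 / y"
    proof -
      have "real n \<ge> 1" using n1 by simp
      then have "y \<le> 2 * real n" using ny by linarith
      then show ?thesis using y1 \<open>real n \<ge> 1\<close> by (simp add: field_simps)
    qed
    also have "2 / y = C * x powr (-(1 / \<alpha>))"
    proof -
      have "y = x powr (1 / \<alpha>) / c0 powr (1 / \<alpha>)" unfolding y_def using c0 xc
        by (simp add: powr_divide)
      then have "x powr (1 / \<alpha>) = y * c0 powr (1 / \<alpha>)" using c0 by (simp add: field_simps)
      then show ?thesis unfolding C_def using c0 xc y1 by (simp add: powr_minus field_simps)
    qed
    finally show ?thesis .
  qed
  then show ?thesis using a c0 by (intro exI[of _ C] exI[of _ "1 / \<alpha>"] exI[of _ c0]) auto
qed

end

lemma o_of_tendsto: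
  fixes a :: "nat \<Rightarrow> real"
  assumes "(\<lambda>n. real n powr (4/3) * a n) \<longlonglongrightarrow> 0"
  shows "a \<in> o(\<lambda>n. real n powr (-4/3))"
proof (rule smalloI_tendsto)
  have "eventually (\<lambda>n. real n powr (4/3) * a n = a n / real n powr (-4/3)) sequentially"
    using eventually_gt_at_top[of 0] by eventually_elim (simp add: powr_minus field_simps)
  then show "(\<lambda>n. a n / real n powr (-4/3)) \<longlonglongrightarrow> 0"
    using assms by (rule Lim_transform_eventually[rotated])
  show "eventually (\<lambda>n. real n powr (-4/3) \<noteq> 0) sequentially"
    using eventually_gt_at_top[of 0] by eventually_elim simp
qed

context prob_space begin

lemma AE_small:
  fixes Z :: "nat \<Rightarrow> 'a \<Rightarrow> real"
  assumes meas: "\<And>n. Z n \<in> borel_measurable M" and nonneg: "\<And>n w. 0 \<le> Z n w"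
    and int: "\<And>n. integrable M (Z n)"
    and ev: "eventually (\<lambda>n. expectation (Z n) \<le> real n powr (-3)) sequentially"
  shows "AE w in M. (\<lambda>n. real n powr (4/3) * Z n w) \<longlonglongrightarrow> 0"
proof -
  define b where "b n w = real n powr (5/3) * Z n w" for n w
  have bnn: "0 \<le> b n w" for n w unfolding b_def using nonneg by simp
  have bm: "(\<lambda>w. ennreal (b n w)) \<in> borel_measurable M" for n unfolding b_def using meas by measurable
  have eb: "expectation (b n) = real n powr (5/3) * expectation (Z n)" for n
    unfolding b_def by simp
  from ev obtain N where N: "\<And>n. n \<ge> N \<Longrightarrow> expectation (Z n) \<le> real n powr (-3)"
    by (auto simp: eventually_sequentially)
  have sumE: "summable (\<lambda>n. expectation (b n))"
  proof (rule summable_comparison_test'[where N=N])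
    show "summable (\<lambda>n. real n powr (-4/3))" by (simp add: summable_real_powr_iff)
    show "norm (expectation (b n)) \<le> real n powr (-4/3)" if "n \<ge> N" for n
    proof -
      have "0 \<le> expectation (b n)" using bnn by (simp add: integral_nonneg)
      moreover have "expectation (b n) \<le> real n powr (5/3) * real n powr (-3)"
        unfolding eb by (intro mult_left_mono N that) auto
      moreover have "real n powr (5/3) * real n powr (-3) = real n powr (-4/3)"
        by (simp add: powr_add[symmetric])
      ultimately show ?thesis by simp
    qed
  qed
  have "(\<integral>\<^sup>+w. (\<Sum>n. ennreal (b n w)) \<partial>M) = (\<Sum>n. \<integral>\<^sup>+w. ennreal (b n w) \<partial>M)"
    by (rule nn_integral_suminf) (rule bm)
  also have "\<dots> = (\<Sum>n. ennreal (expectation (b n)))"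
  proof (intro suminf_cong nn_integral_eq_integral)
    fix n show "integrable M (b n)" unfolding b_def using int by simp
    show "AE w in M. 0 \<le> b n w" using bnn by simp
  qed
  also have "\<dots> = ennreal (\<Sum>n. expectation (b n))"
    using sumE bnn by (intro suminf_ennreal2) (auto simp: integral_nonneg)
  finally have "(\<integral>\<^sup>+w. (\<Sum>n. ennreal (b n w)) \<partial>M) \<noteq> \<infinity>" by simp
  then have "AE w in M. (\<Sum>n. ennreal (b n w)) \<noteq> \<infinity>"
  proof (intro nn_integral_PInf_AE)
    have [measurable]: "\<And>n. (\<lambda>w. ennreal (b n w)) \<in> borel_measurable M" by (rule bm)
    show "(\<lambda>w. \<Sum>n. ennreal (b n w)) \<in> borel_measurable M" by measurable
  qed
  then show ?thesis
  proof (rule AE_mp[OF _ AE_I2], intro impI)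
    fix w assume "(\<Sum>n. ennreal (b n w)) \<noteq> \<infinity>"
    then have "summable (\<lambda>n. b n w)" using bnn by (intro summable_suminf_not_top) auto
    then have lim: "(\<lambda>n. b n w) \<longlonglongrightarrow> 0" by (rule summable_LIMSEQ_zero)
    show "(\<lambda>n. real n powr (4/3) * Z n w) \<longlonglongrightarrow> 0"
    proof (rule tendsto_sandwich[OF _ _ tendsto_const lim])
      show "eventually (\<lambda>n. 0 \<le> real n powr (4/3) * Z n w) sequentially"
        using nonneg by simp
      have "real n powr (4/3) * Z n w \<le> b n w" if "n \<ge> 1" for n
        unfolding b_def using that nonneg[of n w]
        by (intro mult_right_mono powr_mono) auto
      then show "eventually (\<lambda>n. real n powr (4/3) * Z n w \<le> b n w) sequentially"
        by (rule eventually_sequentiallyI)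
    qed
  qed
qed

end

context LS begin

definition Fsig :: "'m measure" where
  "Fsig = sigma (space M)
           ({X i -` A \<inter> space M | i A. 1 \<le> i \<and> A \<in> sets borel} \<union>
            {U i -` A \<inter> space M | i A. 2 \<le> i \<and> A \<in> sets (count_space UNIV)})"

lemma Fgens_sub: "({X i -` A \<inter> space M | i A. 1 \<le> i \<and> A \<in> sets borel} \<union>
            {U i -` A \<inter> space M | i A. 2 \<le> i \<and> A \<in> sets (count_space UNIV)}) \<subseteq> sets (MG Sall)"
proof safe
  fix i :: nat and A :: "'a set" assume "1 \<le> i" "A \<in> sets borel"
  then show "X i -` A \<inter> space M \<in> sets (MG Sall)"
    using measurable_sets[OF X_MG] by (metis space_MG)
next
  fix i :: nat and A :: "nat set" assume "2 \<le> i" "A \<in> sets (count_space UNIV)"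
  moreover have "IU i \<in> Sall" using \<open>2 \<le> i\<close> by (auto simp: Sall_def)
  ultimately show "U i -` A \<inter> space M \<in> sets (MG Sall)"
    using measurable_sets[OF U_MG] by (metis space_MG)
qed

lemma Fgens_space: "({X i -` A \<inter> space M | i A. 1 \<le> i \<and> A \<in> sets borel} \<union>
            {U i -` A \<inter> space M | i A. 2 \<le> i \<and> A \<in> sets (count_space UNIV)}) \<subseteq> Pow (space M)"
  by auto

lemma space_Fsig[simp]: "space Fsig = space M"
  unfolding Fsig_def using Fgens_space by (simp add: space_measure_of_conv)

lemma sets_Fsig: "sets Fsig = sigma_sets (space M) ({X i -` A \<inter> space M | i A. 1 \<le> i \<and> A \<in> sets borel} \<union>
            {U i -` A \<inter> space M | i A. 2 \<le> i \<and> A \<in> sets (count_space UNIV)})"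
  unfolding Fsig_def using Fgens_space by (subst sets_measure_of) auto

lemma Fsig_sub_G: "sets Fsig \<subseteq> G Sall"
proof -
  have "sigma_sets (space (MG Sall)) ({X i -` A \<inter> space M | i A. 1 \<le> i \<and> A \<in> sets borel} \<union>
            {U i -` A \<inter> space M | i A. 2 \<le> i \<and> A \<in> sets (count_space UNIV)}) \<subseteq> sets (MG Sall)"
    by (rule sets.sigma_sets_subset[OF Fgens_sub])
  then show ?thesis unfolding sets_Fsig sets_MG[symmetric] by simp
qed

lemma Fsig_events: "A \<in> sets Fsig \<Longrightarrow> A \<in> events"
  using Fsig_sub_G G_events by blast

lemma subalg_Fsig: "subalgebra M Fsig"
  unfolding subalgebra_def using Fsig_events by auto

lemma sfs_Fsig: "sigma_finite_subalgebra M Fsig"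
proof -
  have "finite_measure_subalgebra M Fsig"
    unfolding finite_measure_subalgebra_def finite_measure_subalgebra_axioms_def
    using subalg_Fsig finite_measure_axioms by simp
  then show ?thesis by (rule finite_measure_subalgebra_is_sigma_finite)
qed

lemma X_Fsig: "1 \<le> i \<Longrightarrow> X i \<in> borel_measurable Fsig"
proof (rule measurableI)
  fix A :: "'a set" assume "1 \<le> i" "A \<in> sets borel"
  then have "X i -` A \<inter> space M \<in> sets Fsig" unfolding sets_Fsig by blast
  then show "X i -` A \<inter> space Fsig \<in> sets Fsig" by simp
qed auto

definition cnt :: "real \<Rightarrow> nat \<Rightarrow> 'm \<Rightarrow> real" where
  "cnt c Tn w = (\<Sum>i\<in>{1..Tn}. indicator {w \<in> space M. c < nrm (X i w)} w) / real Tn"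

lemma cnt_nonneg: "0 \<le> cnt c Tn w"
  unfolding cnt_def by (intro divide_nonneg_nonneg sum_nonneg) auto

lemma Xbig_Fsig: "1 \<le> i \<Longrightarrow> {w \<in> space M. c < nrm (X i w)} \<in> sets Fsig"
proof -
  assume "1 \<le> i"
  then have [measurable]: "X i \<in> borel_measurable Fsig" by (rule X_Fsig)
  have "{w \<in> space Fsig. c < nrm (X i w)} \<in> sets Fsig" by measurable
  then show ?thesis by simp
qed

lemma cnt_Fsig: "cnt c Tn \<in> borel_measurable Fsig"
proof -
  have "(\<lambda>w. indicator {w \<in> space M. c < nrm (X i w)} w :: real) \<in> borel_measurable Fsig" if "i \<in> {1..Tn}" for i
    using Xbig_Fsig[of i c] that by (intro borel_measurable_indicator) auto
  then show ?thesis unfolding cnt_def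
    by (intro borel_measurable_divide borel_measurable_sum) auto
qed

lemma cnt_meas: "cnt c Tn \<in> borel_measurable M"
  using cnt_Fsig measurable_from_subalg[OF subalg_Fsig] by blast

lemma ind_int: "A \<in> events \<Longrightarrow> integrable M (indicator A :: 'm \<Rightarrow> real)"
  by (intro integrable_const_bound[where B=1]) auto

lemma cnt_le1: "cnt c Tn w \<le> 1"
proof (cases "Tn = 0")
  case False
  have "(\<Sum>i\<in>{1..Tn}. indicator {w \<in> space M. c < nrm (X i w)} w) \<le> (\<Sum>i\<in>{1..Tn}. (1::real))"
    by (intro sum_mono) (auto simp: indicator_def)
  then show ?thesis using False unfolding cnt_def by simp
qed (simp add: cnt_def)

lemma cnt_int: "integrable M (cnt c Tn)"
proof (rule integrable_const_bound[where B=1])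
  show "AE x in M. norm (cnt c Tn x) \<le> 1" using cnt_le1 cnt_nonneg by simp
qed (rule cnt_meas)

lemma set_int_ind: "A \<in> events \<Longrightarrow> B \<in> events \<Longrightarrow> (\<integral>x\<in>A. indicator B x \<partial>M) = prob (A \<inter> B)"
proof -
  assume A: "A \<in> events" and B: "B \<in> events"
  have "(\<integral>x\<in>A. indicator B x \<partial>M) = (\<integral>x. indicator (A \<inter> B) x \<partial>M)"
    unfolding set_lebesgue_integral_def by (intro Bochner_Integration.integral_cong) (auto simp: indicator_def)
  also have "\<dots> = prob (A \<inter> B)" using A B sets.sets_into_space by (simp add: Int_absorb2 Int_assoc)
  finally show ?thesis .
qed

lemma UU_pred: "IUU n \<in> S \<Longrightarrow> {w \<in> space M. UU n w = k} \<in> sets (MG S)"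
proof -
  assume "IUU n \<in> S"
  then have [measurable]: "UU n \<in> measurable (MG S) (count_space UNIV)" by (rule UU_MG)
  have "{w \<in> space (MG S). UU n w = k} \<in> sets (MG S)" by measurable
  then show ?thesis by simp
qed

lemma prob_UU: assumes "1 \<le> n" "k \<in> {1..n}" shows "prob {w \<in> space M. UU n w = k} = 1 / real n"
proof -
  have "prob {w \<in> space M. UU n w = k} = measure (distr M (count_space UNIV) (UU n)) {k}"
    using UU_meas by (subst measure_distr) (auto simp: vimage_def Int_def conj_commute)
  also have "\<dots> = pmf (pmf_of_set {1..n}) k" using UU_dist[OF assms(1)] by (simp add: measure_pmf_single)
  also have "\<dots> = 1 / real n" using assms by simp
  finally show ?thesis .
qed

definition S1 :: "real \<Rightarrow> nat \<Rightarrow> 'm set" where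
  "S1 c Tn = (\<Union>k\<in>{1..Tn}. {w \<in> space M. UU Tn w = k} \<inter> {w \<in> space M. c < nrm (X k w)})"

lemma Sall_UU: "IUU Tn \<notin> Sall" by (auto simp: Sall_def)

lemma S1_ev: "S1 c Tn \<in> events"
  unfolding S1_def
proof (rule sets.finite_UN[OF finite_atLeastAtMost])
  fix k assume k: "k \<in> {1..Tn}"
  have "{w \<in> space M. UU Tn w = k} \<in> events" by (rule MG_events[OF UU_pred[of Tn "{IUU Tn}" k]]) simp
  moreover have "{w \<in> space M. c < nrm (X k w)} \<in> events" by (rule Fsig_events[OF Xbig_Fsig]) (use k in simp)
  ultimately show "{w \<in> space M. UU Tn w = k} \<inter> {w \<in> space M. c < nrm (X k w)} \<in> events" by (rule sets.Int)
qed

lemma CE1: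
  assumes Tn: "1 \<le> Tn"
  shows "AE w in M. real_cond_exp M Fsig (indicator (S1 c Tn)) w = cnt c Tn w"
proof -
  interpret S: sigma_finite_subalgebra M Fsig by (rule sfs_Fsig)
  let ?B = "\<lambda>k. {w \<in> space M. c < nrm (X k w)}"
  let ?V = "\<lambda>k. {w \<in> space M. UU Tn w = k}"
  show ?thesis
  proof (rule S.real_cond_exp_charact)
    fix A assume A: "A \<in> sets Fsig"
    have Aev: "A \<in> events" using A by (rule Fsig_events)
    have Bev: "?B k \<in> events" if "k \<in> {1..Tn}" for k by (rule Fsig_events[OF Xbig_Fsig]) (use that in simp)
    have Vev: "?V k \<in> events" for k by (rule MG_events[OF UU_pred[of Tn "{IUU Tn}" k]]) simp
    have "(\<integral>x\<in>A. indicator (S1 c Tn) x \<partial>M) = prob (A \<inter> S1 c Tn)"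
      by (rule set_int_ind[OF Aev S1_ev])
    also have "A \<inter> S1 c Tn = (\<Union>k\<in>{1..Tn}. ?V k \<inter> (A \<inter> ?B k))"
      unfolding S1_def by auto
    also have "prob \<dots> = (\<Sum>k\<in>{1..Tn}. prob (?V k \<inter> (A \<inter> ?B k)))"
    proof (rule finite_measure_finite_Union)
      show "finite {1..Tn}" by simp
      show "(\<lambda>k. ?V k \<inter> (A \<inter> ?B k)) ` {1..Tn} \<subseteq> events" using Vev Aev Bev by blast
      show "disjoint_family_on (\<lambda>k. ?V k \<inter> (A \<inter> ?B k)) {1..Tn}"
        unfolding disjoint_family_on_def by auto
    qed
    also have "\<dots> = (\<Sum>k\<in>{1..Tn}. prob (A \<inter> ?B k) / real Tn)"
    proof (rule sum.cong[OF refl])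
      fix k assume k: "k \<in> {1..Tn}"
      have "prob (?V k \<inter> (A \<inter> ?B k)) = prob (?V k) * prob (A \<inter> ?B k)"
      proof (rule indep2)
        show "{IUU Tn} \<subseteq> {i. valid_idx i}" using Tn by (auto simp: valid_idx_def)
        show "Sall \<subseteq> {i. valid_idx i}" by (rule Sall_valid)
        show "{IUU Tn} \<inter> Sall = {}" using Sall_UU by auto
        show "?V k \<in> G {IUU Tn}" using UU_pred[of Tn "{IUU Tn}" k] sets_MG by auto
        have "A \<inter> ?B k \<in> sets Fsig" using A Xbig_Fsig[of k c] k by auto
        then show "A \<inter> ?B k \<in> G Sall" using Fsig_sub_G by blast
      qed
      then show "prob (?V k \<inter> (A \<inter> ?B k)) = prob (A \<inter> ?B k) / real Tn"
        using prob_UU[OF Tn k] by simp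
    qed
    also have "\<dots> = (\<integral>x\<in>A. cnt c Tn x \<partial>M)"
    proof -
      have intk: "integrable M (indicator (A \<inter> ?B k) :: 'm \<Rightarrow> real)" if k: "k \<in> {1..Tn}" for k
        by (rule ind_int[OF sets.Int[OF Aev Bev[OF k]]])
      have "(\<integral>x\<in>A. cnt c Tn x \<partial>M) = (\<integral>x. (\<Sum>k\<in>{1..Tn}. indicator (A \<inter> ?B k) x) / real Tn \<partial>M)"
        unfolding set_lebesgue_integral_def cnt_def
        by (intro Bochner_Integration.integral_cong) (auto simp: indicator_def sum_divide_distrib[symmetric])
      also have "\<dots> = (\<integral>x. (\<Sum>k\<in>{1..Tn}. indicator (A \<inter> ?B k) x) \<partial>M) / real Tn"
        by simp
      also have "(\<integral>x. (\<Sum>k\<in>{1..Tn}. indicator (A \<inter> ?B k) x :: real) \<partial>M) = (\<Sum>k\<in>{1..Tn}. (\<integral>x. indicator (A \<inter> ?B k) x \<partial>M))"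
        by (rule Bochner_Integration.integral_sum[OF intk])
      also have "\<dots> = (\<Sum>k\<in>{1..Tn}. prob (A \<inter> ?B k))"
      proof (rule sum.cong[OF refl])
        fix k assume k: "k \<in> {1..Tn}"
        have "A \<inter> ?B k \<subseteq> space M" by auto
        then show "(\<integral>x. indicator (A \<inter> ?B k) x \<partial>M) = prob (A \<inter> ?B k)"
          by (simp add: Int_absorb2)
      qed
      finally show ?thesis by (simp add: sum_divide_distrib)
    qed
    finally show "(\<integral>x\<in>A. indicator (S1 c Tn) x \<partial>M) = (\<integral>x\<in>A. cnt c Tn x \<partial>M)" .
  next
    show "integrable M (indicator (S1 c Tn) :: 'm \<Rightarrow> real)" by (rule ind_int[OF S1_ev])
    show "integrable M (cnt c Tn)" by (rule cnt_int)
    show "cnt c Tn \<in> borel_measurable Fsig" by (rule cnt_Fsig)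
  qed
qed

end

context LS begin

definition Dq :: "real \<Rightarrow> nat \<Rightarrow> 'm set" where
  "Dq s n = {w \<in> space M. s < nrm (Dt n w)}"

lemma Dq_G: "Dq s n \<in> sets (MG {IDt n})"
  unfolding Dq_def by (rule nrm_gt_sets(1)[OF Dt_MG]) simp

lemma Dq_ev: "Dq s n \<in> events"
  by (rule MG_events[OF Dq_G])

lemma prob_Dq: "1 \<le> n \<Longrightarrow> prob (Dq s n) = prob {w \<in> space M. Bd s 1 w}"
proof -
  assume n: "1 \<le> n"
  have A: "{y. s < nrm y} \<in> sets borel" by measurable
  have "prob (Dq s n) = measure (distr M borel (Dt n)) {y. s < nrm y}"
    using A Dt_meas by (subst measure_distr) (auto simp: Dq_def vimage_def Int_def conj_commute)
  also have "\<dots> = measure (distr M borel (Delta 1)) {y. s < nrm y}" using Dt_dist[OF n] by simp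
  also have "\<dots> = prob {w \<in> space M. Bd s 1 w}"
    using A Delta_meas by (simp add: measure_distr Bd_set_eq)
  finally show ?thesis .
qed

lemma CE_Dt:
  assumes n: "1 \<le> n"
  shows "AE w in M. real_cond_exp M Fsig (indicator (Dq s n)) w = prob (Dq s n)"
proof -
  interpret S: sigma_finite_subalgebra M Fsig by (rule sfs_Fsig)
  show ?thesis
  proof (rule S.real_cond_exp_charact)
    fix A assume A: "A \<in> sets Fsig"
    have Aev: "A \<in> events" using A by (rule Fsig_events)
    have "(\<integral>x\<in>A. indicator (Dq s n) x \<partial>M) = prob (A \<inter> Dq s n)"
      by (rule set_int_ind[OF Aev Dq_ev])
    also have "\<dots> = prob A * prob (Dq s n)"
    proof (rule indep2)
      show "Sall \<subseteq> {i. valid_idx i}" by (rule Sall_valid)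
      show "{IDt n} \<subseteq> {i. valid_idx i}" using n by (auto simp: valid_idx_def)
      show "Sall \<inter> {IDt n} = {}" by (auto simp: Sall_def)
      show "A \<in> G Sall" using A Fsig_sub_G by blast
      show "Dq s n \<in> G {IDt n}" using Dq_G sets_MG by blast
    qed
    also have "\<dots> = (\<integral>x\<in>A. prob (Dq s n) \<partial>M)"
    proof -
      have "(\<integral>x\<in>A. prob (Dq s n) \<partial>M) = (\<integral>x. indicator A x * prob (Dq s n) \<partial>M)"
        unfolding set_lebesgue_integral_def by simp
      also have "\<dots> = (\<integral>x. indicator A x \<partial>M) * prob (Dq s n)" by simp
      also have "(\<integral>x. indicator A x \<partial>M) = prob A" using Aev sets.sets_into_space
        by (simp add: Int_absorb2)
      finally show ?thesis by simp
    qed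
    finally show "(\<integral>x\<in>A. indicator (Dq s n) x \<partial>M) = (\<integral>x\<in>A. prob (Dq s n) \<partial>M)" .
  next
    show "integrable M (indicator (Dq s n) :: 'm \<Rightarrow> real)" by (rule ind_int[OF Dq_ev])
  qed auto
qed

lemma rce_bound:
  assumes Sp: "S \<subseteq> space M" and S'ev: "S' \<in> events"
    and sub: "AE w in M. w \<in> S \<longrightarrow> w \<in> S'"
    and up: "AE w in M. real_cond_exp M Fsig (indicator S') w \<le> g w"
    and g0: "\<And>w. 0 \<le> g w"
  shows "AE w in M. 0 \<le> real_cond_exp M Fsig (indicator S) w \<and> real_cond_exp M Fsig (indicator S) w \<le> g w"
proof -
  interpret S: sigma_finite_subalgebra M Fsig by (rule sfs_Fsig)
  show ?thesis
  proof (cases "S \<in> events")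
    case True
    have "AE w in M. indicator S w \<le> (indicator S' w :: real)"
      using sub by eventually_elim (auto simp: indicator_def)
    then have m: "AE w in M. real_cond_exp M Fsig (indicator S) w \<le> real_cond_exp M Fsig (indicator S') w"
      by (rule S.real_cond_exp_mono) (auto intro!: ind_int True S'ev)
    have p: "AE w in M. 0 \<le> real_cond_exp M Fsig (indicator S) w"
      by (rule S.real_cond_exp_pos) (use True in auto)
    from m p up show ?thesis by eventually_elim auto
  next
    case False
    have nm: "(\<lambda>x. ennreal (indicator S x :: real)) \<notin> borel_measurable M"
    proof
      assume "(\<lambda>x. ennreal (indicator S x :: real)) \<in> borel_measurable M"
      then have "(\<lambda>x. ennreal (indicator S x :: real)) -` {1} \<inter> space M \<in> events"
        by (rule measurable_sets) auto
      moreover have "(\<lambda>x. ennreal (indicator S x :: real)) -` {1} \<inter> space M = S"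
        using Sp by (auto simp: indicator_def)
      ultimately show False using False by simp
    qed
    have z1: "nn_cond_exp M Fsig (\<lambda>x. ennreal (indicator S x :: real)) = (\<lambda>_. 0)"
      using nm by (simp add: nn_cond_exp_def)
    have z2: "(\<lambda>x. ennreal (- indicator S x :: real)) = (\<lambda>x. 0)"
      by (rule ext) (simp add: indicator_def ennreal_neg)
    have "AE x in M. (\<lambda>x. 0) x = nn_cond_exp M Fsig (\<lambda>x. 0) x"
      by (rule S.nn_cond_exp_F_meas) simp
    then have "AE w in M. real_cond_exp M Fsig (indicator S) w = 0"
      unfolding real_cond_exp_def z1 z2 by eventually_elim simp
    then show ?thesis by eventually_elim (simp add: g0)
  qed
qed

lemma UU_AE: assumes "1 \<le> Tn" shows "AE w in M. UU Tn w \<in> {1..Tn}"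
proof -
  have "UU Tn -` {1..Tn} \<inter> space M \<in> events" by (rule measurable_sets[OF UU_meas]) simp
  moreover have "{w \<in> space M. \<not> UU Tn w \<in> {1..Tn}} = space M - (UU Tn -` {1..Tn} \<inter> space M)" by auto
  ultimately have ev: "{w \<in> space M. \<not> UU Tn w \<in> {1..Tn}} \<in> events" by simp
  have "prob {w \<in> space M. \<not> UU Tn w \<in> {1..Tn}} = measure (distr M (count_space UNIV) (UU Tn)) (- {1..Tn})"
    using UU_meas by (subst measure_distr) (auto simp: vimage_def Int_def conj_commute)
  also have "\<dots> = measure (measure_pmf (pmf_of_set {1..Tn})) (- {1..Tn})" using UU_dist[OF assms] by simp
  also have "\<dots> = 0" using assms by (subst measure_pmf_zero_iff) auto
  finally have "emeasure M {w \<in> space M. \<not> UU Tn w \<in> {1..Tn}} = 0"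
    by (simp add: emeasure_eq_measure)
  then show ?thesis using ev by (subst AE_iff_measurable[OF ev refl])
qed

lemma claimA:
  assumes Tn: "1 \<le> Tn"
  shows "AE w in M. 0 \<le> real_cond_exp M Fsig (indicator {w' \<in> space M. nrm (X (UU Tn w') w') > c}) w \<and>
                    real_cond_exp M Fsig (indicator {w' \<in> space M. nrm (X (UU Tn w') w') > c}) w \<le> cnt c Tn w"
proof (rule rce_bound[OF _ S1_ev])
  show "AE w in M. w \<in> {w' \<in> space M. nrm (X (UU Tn w') w') > c} \<longrightarrow> w \<in> S1 c Tn"
    using UU_AE[OF Tn] by eventually_elim (auto simp: S1_def)
  show "AE w in M. real_cond_exp M Fsig (indicator (S1 c Tn)) w \<le> cnt c Tn w"
    using CE1[OF Tn, of c] by eventually_elim simp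
qed (auto simp: cnt_nonneg)

lemma claimB:
  assumes Tn: "1 \<le> Tn" and n: "1 \<le> n"
  shows "AE w in M. 0 \<le> real_cond_exp M Fsig (indicator {w' \<in> space M.
             nrm (X (UU Tn w') w' + (if R n w' then Dt n w' else 0)) > c}) w \<and>
          real_cond_exp M Fsig (indicator {w' \<in> space M.
             nrm (X (UU Tn w') w' + (if R n w' then Dt n w' else 0)) > c}) w
        \<le> cnt (c/2) Tn w + prob {w \<in> space M. Bd (c/2) 1 w}"
proof (rule rce_bound[OF _ sets.Un[OF S1_ev Dq_ev]])
  interpret S: sigma_finite_subalgebra M Fsig by (rule sfs_Fsig)
  show "AE w in M. w \<in> {w' \<in> space M. nrm (X (UU Tn w') w' + (if R n w' then Dt n w' else 0)) > c}
          \<longrightarrow> w \<in> S1 (c/2) Tn \<union> Dq (c/2) n"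
    using UU_AE[OF Tn]
  proof eventually_elim
    case (elim w)
    show ?case
    proof
      assume "w \<in> {w' \<in> space M. nrm (X (UU Tn w') w' + (if R n w' then Dt n w' else 0)) > c}"
      then have w: "w \<in> space M" and big: "c < nrm (X (UU Tn w) w + (if R n w then Dt n w else 0))" by auto
      have "nrm (if R n w then Dt n w else 0) \<le> nrm (Dt n w)" using nrm_nonneg by auto
      then have "c < nrm (X (UU Tn w) w) + nrm (Dt n w)"
        using big nrm_triangle[of "X (UU Tn w) w" "if R n w then Dt n w else 0"] by linarith
      then consider "c/2 < nrm (X (UU Tn w) w)" | "c/2 < nrm (Dt n w)" by linarith
      then show "w \<in> S1 (c/2) Tn \<union> Dq (c/2) n"
        by cases (use w elim in \<open>auto simp: S1_def Dq_def\<close>)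
    qed
  qed
  have i1: "integrable M (indicator (S1 (c/2) Tn) :: 'm \<Rightarrow> real)" by (rule ind_int[OF S1_ev])
  have i2: "integrable M (indicator (Dq (c/2) n) :: 'm \<Rightarrow> real)" by (rule ind_int[OF Dq_ev])
  have "AE w in M. indicator (S1 (c/2) Tn \<union> Dq (c/2) n) w \<le> (indicator (S1 (c/2) Tn) w + indicator (Dq (c/2) n) w :: real)"
    by (auto simp: indicator_def)
  then have m: "AE w in M. real_cond_exp M Fsig (indicator (S1 (c/2) Tn \<union> Dq (c/2) n)) w \<le>
      real_cond_exp M Fsig (\<lambda>w. indicator (S1 (c/2) Tn) w + indicator (Dq (c/2) n) w) w"
    by (rule S.real_cond_exp_mono) (auto intro!: ind_int sets.Un S1_ev Dq_ev i1 i2)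
  have a: "AE w in M. real_cond_exp M Fsig (\<lambda>w. indicator (S1 (c/2) Tn) w + indicator (Dq (c/2) n) w) w =
     real_cond_exp M Fsig (indicator (S1 (c/2) Tn)) w + real_cond_exp M Fsig (indicator (Dq (c/2) n)) w"
    by (rule S.real_cond_exp_add[OF i1 i2])
  show "AE w in M. real_cond_exp M Fsig (indicator (S1 (c/2) Tn \<union> Dq (c/2) n)) w \<le> cnt (c/2) Tn w + prob {w \<in> space M. Bd (c/2) 1 w}"
    using m a CE1[OF Tn, of "c/2"] CE_Dt[OF n, of "c/2"]
    by eventually_elim (simp add: prob_Dq[OF n])
qed (auto simp: cnt_nonneg intro!: add_nonneg_nonneg)

end

lemma asymp1: "eventually (\<lambda>x::real. exp (3 * (x + 1) powr (1/3)) / 2 powr (x + 1) \<le> x powr (-3) / 2) at_top"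
  by real_asymp

lemma T_bounds: "1 \<le> T n" "real (T n) \<le> exp (3 * real n powr (1/3))"
proof -
  have "1 \<le> exp (3 * real n powr (1/3))" by simp
  then show "1 \<le> T n" unfolding T_def by (metis floor_mono floor_one nat_mono nat_one_as_int)
  show "real (T n) \<le> exp (3 * real n powr (1/3))" unfolding T_def
    by (metis exp_ge_zero int_nat_eq le_floor_iff nat_0_le of_int_of_nat_eq order.refl zero_le_floor)
qed

lemma T_asymp_gen:
  assumes "\<And>n. real (Tf n) \<le> exp (3 * (real n + 1) powr (1/3))"
  shows "eventually (\<lambda>n. real (Tf n) / 2 ^ Suc n \<le> real n powr (-3) / 2) sequentially"
proof -
  obtain x0 :: real where x0: "\<And>x. x \<ge> x0 \<Longrightarrow> exp (3 * (x + 1) powr (1/3)) / 2 powr (x + 1) \<le> x powr (-3) / 2"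
    using asymp1 unfolding eventually_at_top_linorder by blast
  show ?thesis
  proof (rule eventually_sequentiallyI[of "nat \<lceil>x0\<rceil>"])
    fix n assume n: "nat \<lceil>x0\<rceil> \<le> n"
    then have "real n \<ge> x0" by linarith
    from x0[OF this] have a: "exp (3 * (real n + 1) powr (1/3)) / 2 powr (real n + 1) \<le> real n powr (-3) / 2" .
    have b: "(2::real) powr (real n + 1) = 2 ^ Suc n" using powr_realpow[of 2 "Suc n"] by (simp add: add.commute)
    have c: "real (Tf n) / 2 ^ Suc n \<le> exp (3 * (real n + 1) powr (1/3)) / 2 ^ Suc n"
      using assms[of n] by (intro divide_right_mono) auto
    show "real (Tf n) / 2 ^ Suc n \<le> real n powr (-3) / 2" using a b c by simp
  qed
qed

lemma T_asymp1: "eventually (\<lambda>n. real (T (n+1)) / 2 ^ Suc n \<le> real n powr (-3) / 2) sequentially"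
proof (rule T_asymp_gen)
  fix n
  show "real (T (n+1)) \<le> exp (3 * (real n + 1) powr (1/3))" using T_bounds(2)[of "n+1"] by (simp add: add.commute)
qed

lemma T_asymp0: "eventually (\<lambda>n. real (T n) / 2 ^ Suc n \<le> real n powr (-3) / 2) sequentially"
proof (rule T_asymp_gen)
  fix n
  have "real n powr (1/3) \<le> (real n + 1) powr (1/3)" by (intro powr_mono2) auto
  then show "real (T n) \<le> exp (3 * (real n + 1) powr (1/3))"
    using T_bounds(2)[of n] by (smt (verit) exp_le_cancel_iff)
qed

lemma Pbound:
  fixes p :: "real \<Rightarrow> real"
  assumes tail: "\<And>x. x \<ge> x0 \<Longrightarrow> p x \<le> C * x powr (-\<beta>)"
    and pnn: "\<And>x. 0 \<le> p x" and b: "\<beta> > 0" and C: "C \<ge> 0" and g: "\<gamma> \<ge> 2" and gb: "\<gamma> * \<beta> \<ge> 6 + \<beta>"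
  shows "eventually (\<lambda>n. (real n + 1) * p (real n powr \<gamma> / (2 * (real n + 1))) \<le> real n powr (-3) / 2) sequentially"
proof (rule eventually_sequentiallyI[of "nat \<lceil>max 1 (max (4 * x0) (4 * C * 4 powr \<beta>))\<rceil>"])
  fix n assume "nat \<lceil>max 1 (max (4 * x0) (4 * C * 4 powr \<beta>))\<rceil> \<le> n"
  then have r: "real n \<ge> max 1 (max (4 * x0) (4 * C * 4 powr \<beta>))" by linarith
  define rn where "rn = real n"
  have r1: "rn \<ge> 1" and rx: "rn \<ge> 4 * x0" and rC: "rn \<ge> 4 * C * 4 powr \<beta>" using r unfolding rn_def by auto
  define y where "y = rn powr \<gamma> / (2 * (rn + 1))"
  define z where "z = rn powr (\<gamma> - 1) / 4"
  have zpos: "z > 0" using r1 unfolding z_def by simp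
  have "rn powr \<gamma> / (2 * (rn + 1)) \<ge> rn powr \<gamma> / (4 * rn)"
    using r1 by (intro divide_left_mono) auto
  moreover have "rn powr \<gamma> / (4 * rn) = z" unfolding z_def using r1 by (simp add: powr_diff)
  ultimately have yz: "y \<ge> z" unfolding y_def by simp
  have "rn powr (\<gamma> - 1) \<ge> rn powr 1" using r1 g by (intro powr_mono) auto
  then have "z \<ge> rn / 4" unfolding z_def using r1 by simp
  then have zx: "z \<ge> x0" using rx by simp
  have "p y \<le> C * y powr (-\<beta>)" using tail yz zx by simp
  also have "\<dots> \<le> C * z powr (-\<beta>)" using yz zpos b C by (intro mult_left_mono powr_mono2') auto
  also have "z powr (-\<beta>) = 4 powr \<beta> * rn powr (- ((\<gamma> - 1) * \<beta>))"
  proof -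
    have "z powr (-\<beta>) = (rn powr (\<gamma> - 1)) powr (-\<beta>) / 4 powr (-\<beta>)"
      unfolding z_def using r1 by (simp add: powr_divide)
    also have "(rn powr (\<gamma> - 1)) powr (-\<beta>) = rn powr (- ((\<gamma> - 1) * \<beta>))" by (simp add: powr_powr)
    also have "(4::real) powr (-\<beta>) = 1 / 4 powr \<beta>" by (simp add: powr_minus divide_inverse)
    finally show ?thesis by simp
  qed
  finally have py: "p y \<le> C * (4 powr \<beta> * rn powr (- ((\<gamma> - 1) * \<beta>)))" .
  have "(rn + 1) * p y \<le> (2 * rn) * (C * (4 powr \<beta> * rn powr (- ((\<gamma> - 1) * \<beta>))))"
  proof (rule mult_mono)
    show "rn + 1 \<le> 2 * rn" using r1 by simp
    show "0 \<le> 2 * rn" using r1 by simp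
    show "p y \<le> C * (4 powr \<beta> * rn powr (- ((\<gamma> - 1) * \<beta>)))" by (rule py)
    show "0 \<le> p y" by (rule pnn)
  qed
  also have "\<dots> = 2 * C * 4 powr \<beta> * rn powr (1 - (\<gamma> - 1) * \<beta>)"
  proof -
    have "rn powr (1 + (- ((\<gamma> - 1) * \<beta>))) = rn powr 1 * rn powr (- ((\<gamma> - 1) * \<beta>))" by (rule powr_add)
    then have "rn powr (1 - (\<gamma> - 1) * \<beta>) = rn * rn powr (- ((\<gamma> - 1) * \<beta>))" using r1 by simp
    then show ?thesis by (simp add: mult_ac)
  qed
  also have "\<dots> \<le> 2 * C * 4 powr \<beta> * rn powr (-5)"
    using r1 gb C by (intro mult_left_mono powr_mono) (auto simp: algebra_simps)
  also have "\<dots> = (2 * C * 4 powr \<beta> * rn powr (-2)) * rn powr (-3)"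
    using r1 by (simp add: powr_add[symmetric])
  also have "\<dots> \<le> (1/2) * rn powr (-3)"
  proof (rule mult_right_mono)
    have "rn powr (-2) = 1 / (rn * rn)" using r1 by (simp add: powr_minus powr_numeral power2_eq_square field_simps)
    moreover have "4 * C * 4 powr \<beta> \<le> rn * rn" using rC r1
      by (smt (verit) mult_le_cancel_left1 mult_nonneg_nonneg)
    moreover have "rn * rn > 0" using r1 by simp
    ultimately have h: "4 * C * 4 powr \<beta> / (rn * rn) \<le> 1" by simp
    have "2 * C * 4 powr \<beta> * rn powr (-2) = (4 * C * 4 powr \<beta> / (rn * rn)) / 2"
      using \<open>rn powr (-2) = 1 / (rn * rn)\<close> by simp
    then show "2 * C * 4 powr \<beta> * rn powr (-2) \<le> 1/2" using h by simp
  qed simp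
  finally show "(real n + 1) * p (real n powr \<gamma> / (2 * (real n + 1))) \<le> real n powr (-3) / 2"
    unfolding y_def rn_def by simp
qed

lemma Qlim:
  fixes p :: "real \<Rightarrow> real"
  assumes tail: "\<And>x. x \<ge> x0 \<Longrightarrow> p x \<le> C * x powr (-\<beta>)"
    and pnn: "\<And>x. 0 \<le> p x" and b: "\<beta> > 0" and C: "C \<ge> 0" and g: "\<gamma> \<ge> 2" and gb: "\<gamma> * \<beta> \<ge> 6 + \<beta>"
  shows "(\<lambda>n. real n powr (4/3) * p (real n powr \<gamma> / 2)) \<longlonglongrightarrow> 0"
proof (rule tendsto_sandwich[OF _ _ tendsto_const])
  show "eventually (\<lambda>n. 0 \<le> real n powr (4/3) * p (real n powr \<gamma> / 2)) sequentially"
    using pnn by simp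
  have lim: "((\<lambda>n. real n powr (-4)) \<longlongrightarrow> 0) sequentially"
    by (rule tendsto_neg_powr[OF _ filterlim_real_sequentially]) simp
  show "(\<lambda>n. C * 2 powr \<beta> * real n powr (-4)) \<longlonglongrightarrow> 0"
    using tendsto_mult_right_zero[OF lim, of "C * 2 powr \<beta>"] by simp
  show "eventually (\<lambda>n. real n powr (4/3) * p (real n powr \<gamma> / 2) \<le> C * 2 powr \<beta> * real n powr (-4)) sequentially"
  proof (rule eventually_sequentiallyI[of "nat \<lceil>max 1 (2 * x0)\<rceil>"])
    fix n assume "nat \<lceil>max 1 (2 * x0)\<rceil> \<le> n"
    then have r: "real n \<ge> max 1 (2 * x0)" by linarith
    define rn where "rn = real n"
    have r1: "rn \<ge> 1" and rx: "rn \<ge> 2 * x0" using r unfolding rn_def by auto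
    have "rn powr \<gamma> \<ge> rn powr 1" using r1 g by (intro powr_mono) auto
    then have xx: "rn powr \<gamma> / 2 \<ge> x0" using r1 rx by simp
    have "p (rn powr \<gamma> / 2) \<le> C * (rn powr \<gamma> / 2) powr (-\<beta>)" by (rule tail[OF xx])
    also have "(rn powr \<gamma> / 2) powr (-\<beta>) = 2 powr \<beta> * rn powr (- (\<gamma> * \<beta>))"
    proof -
      have "(rn powr \<gamma> / 2) powr (-\<beta>) = (rn powr \<gamma>) powr (-\<beta>) / 2 powr (-\<beta>)"
        using r1 by (simp add: powr_divide)
      also have "(rn powr \<gamma>) powr (-\<beta>) = rn powr (- (\<gamma> * \<beta>))" by (simp add: powr_powr)
      also have "(2::real) powr (-\<beta>) = 1 / 2 powr \<beta>" by (simp add: powr_minus divide_inverse)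
      finally show ?thesis by simp
    qed
    finally have pb: "p (rn powr \<gamma> / 2) \<le> C * (2 powr \<beta> * rn powr (- (\<gamma> * \<beta>)))" .
    have "rn powr (4/3) * p (rn powr \<gamma> / 2) \<le> rn powr (4/3) * (C * (2 powr \<beta> * rn powr (- (\<gamma> * \<beta>))))"
      using pb by (intro mult_left_mono) auto
    also have "\<dots> = C * 2 powr \<beta> * (rn powr (4/3) * rn powr (- (\<gamma> * \<beta>)))" by (simp add: mult_ac)
    also have "rn powr (4/3) * rn powr (- (\<gamma> * \<beta>)) = rn powr (4/3 - \<gamma> * \<beta>)"
      by (simp add: powr_add[symmetric])
    also have "C * 2 powr \<beta> * rn powr (4/3 - \<gamma> * \<beta>) \<le> C * 2 powr \<beta> * rn powr (-4)"
      using r1 gb b C by (intro mult_left_mono powr_mono) auto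
    finally show "real n powr (4/3) * p (real n powr \<gamma> / 2) \<le> C * 2 powr \<beta> * real n powr (-4)"
      unfolding rn_def .
  qed
qed


context LS begin

lemma E_cnt:
  assumes Tn: "1 \<le> Tn" and c: "0 \<le> c"
  shows "expectation (cnt c Tn) \<le> real Tn / 2 ^ Suc m + (real m + 1) * prob {w \<in> space M. Bd (c / (real m + 1)) 1 w}"
proof -
  let ?B = "\<lambda>i. {w \<in> space M. c < nrm (X i w)}"
  let ?b = "real Tn / 2 ^ Suc m + (real m + 1) * prob {w \<in> space M. Bd (c / (real m + 1)) 1 w}"
  have Bev: "?B i \<in> events" if "i \<in> {1..Tn}" for i by (rule Fsig_events[OF Xbig_Fsig]) (use that in simp)
  have intk: "integrable M (indicator (?B i) :: 'm \<Rightarrow> real)" if "i \<in> {1..Tn}" for i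
    by (rule ind_int[OF Bev[OF that]])
  have "expectation (cnt c Tn) = (\<integral>w. (\<Sum>i\<in>{1..Tn}. indicator (?B i) w :: real) \<partial>M) / real Tn"
    unfolding cnt_def by simp
  also have "(\<integral>w. (\<Sum>i\<in>{1..Tn}. indicator (?B i) w :: real) \<partial>M) = (\<Sum>i\<in>{1..Tn}. (\<integral>w. indicator (?B i) w \<partial>M))"
    by (rule Bochner_Integration.integral_sum[OF intk])
  also have "\<dots> = (\<Sum>i\<in>{1..Tn}. prob (?B i))"
  proof (rule sum.cong[OF refl])
    fix i assume "i \<in> {1..Tn}"
    have "?B i \<subseteq> space M" by auto
    then show "(\<integral>x. indicator (?B i) x \<partial>M) = prob (?B i)" by (simp add: Int_absorb2)
  qed
  also have "\<dots> \<le> (\<Sum>i\<in>{1..Tn}. ?b)"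
  proof (rule sum_mono)
    fix i assume i: "i \<in> {1..Tn}"
    have eq: "(real m + 1) * (c / (real m + 1)) = c" by simp
    have "prob (?B i) \<le> real i / 2 ^ Suc m + (real m + 1) * prob {w \<in> space M. Bd (c / (real m + 1)) 1 w}"
      using prob_X_big[of i "c / (real m + 1)" m] i c unfolding eq by simp
    also have "\<dots> \<le> ?b" using i by (intro add_right_mono divide_right_mono) auto
    finally show "prob (?B i) \<le> ?b" .
  qed
  also have "\<dots> = real Tn * ?b" by simp
  finally have "expectation (cnt c Tn) \<le> (real Tn * ?b) / real Tn" by (simp add: divide_right_mono)
  then show ?thesis using Tn by simp
qed

lemma main:
  assumes conv: "\<exists>\<alpha>>0. \<exists>L :: 'a measure. prob_space L \<and> sets L = sets borel \<and>
        (\<forall>f :: 'a \<Rightarrow> real. continuous_on UNIV f \<and> bounded (range f) \<longrightarrow>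
          (\<lambda>n. \<integral>\<omega>. f ((real n powr (-\<alpha>)) *\<^sub>R (\<Sum>i=1..n. Delta i \<omega>)) \<partial>M)
            \<longlonglongrightarrow> (\<integral>x. f x \<partial>L))"
  shows "\<exists>\<gamma>0. \<forall>\<gamma>\<ge>\<gamma>0. AE \<omega> in M.
       (\<lambda>n. real_cond_exp M Fsig
          (indicator {\<omega>'\<in>space M. nrm (X (UU (T (n+1)) \<omega>') \<omega>') > real n powr \<gamma>}) \<omega>)
         \<in> o(\<lambda>n. real n powr (-4/3)) \<and>
       (\<lambda>n. real_cond_exp M Fsig
          (indicator {\<omega>'\<in>space M.
             nrm (X (UU (T n) \<omega>') \<omega>' + (if R n \<omega>' then Dt n \<omega>' else 0)) > real n powr \<gamma>}) \<omega>)
         \<in> o(\<lambda>n. real n powr (-4/3))"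
proof -
  obtain C \<beta> x0 where b: "\<beta> > 0" and x0: "x0 > 0"
    and tail: "\<And>x. x \<ge> x0 \<Longrightarrow> prob {w \<in> space M. Bd x 1 w} \<le> C * x powr (-\<beta>)"
    using tail_bound[OF conv] by blast
  define p where "p x = prob {w \<in> space M. Bd x 1 w}" for x
  have pnn: "0 \<le> p x" for x unfolding p_def by simp
  have tailp: "\<And>x. x \<ge> x0 \<Longrightarrow> p x \<le> C * x powr (-\<beta>)" unfolding p_def by (rule tail)
  have C: "C \<ge> 0"
  proof -
    have "0 \<le> C * x0 powr (-\<beta>)" using tailp[of x0] pnn[of x0] by simp
    moreover have "x0 powr (-\<beta>) > 0" using x0 by simp
    ultimately show ?thesis by (simp add: zero_le_mult_iff)
  qed
  have pmono: "x \<le> y \<Longrightarrow> p y \<le> p x" for x y unfolding p_def by (rule Bd_mono_prob)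
  show ?thesis
  proof (intro exI[of _ "max 2 ((6 + \<beta>) / \<beta>)"] allI impI)
    fix \<gamma> assume "\<gamma> \<ge> max 2 ((6 + \<beta>) / \<beta>)"
    then have g: "\<gamma> \<ge> 2" and "\<gamma> \<ge> (6 + \<beta>) / \<beta>" by auto
    then have gb: "\<gamma> * \<beta> \<ge> 6 + \<beta>" using b by (simp add: field_simps)
    define Z1 where "Z1 n = cnt (real n powr \<gamma>) (T (n+1))" for n
    define Z2 where "Z2 n = cnt (real n powr \<gamma> / 2) (T n)" for n
    have PB: "eventually (\<lambda>n. (real n + 1) * p (real n powr \<gamma> / (2 * (real n + 1))) \<le> real n powr (-3) / 2) sequentially"
      by (rule Pbound[OF tailp pnn b C g gb])
    have E1: "eventually (\<lambda>n. expectation (Z1 n) \<le> real n powr (-3)) sequentially"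
      using PB T_asymp1
    proof eventually_elim
      case (elim n)
      have "expectation (Z1 n) \<le> real (T (n+1)) / 2 ^ Suc n + (real n + 1) * p (real n powr \<gamma> / (real n + 1))"
        unfolding Z1_def p_def by (rule E_cnt[OF T_bounds(1)]) simp
      also have "p (real n powr \<gamma> / (real n + 1)) \<le> p (real n powr \<gamma> / (2 * (real n + 1)))"
        by (rule pmono) (simp add: divide_left_mono)
      then have "(real n + 1) * p (real n powr \<gamma> / (real n + 1)) \<le> (real n + 1) * p (real n powr \<gamma> / (2 * (real n + 1)))"
        by (intro mult_left_mono) auto
      finally show ?case using elim by simp
    qed
    have E2: "eventually (\<lambda>n. expectation (Z2 n) \<le> real n powr (-3)) sequentially"
      using PB T_asymp0
    proof eventually_elim
      case (elim n)
      have "expectation (Z2 n) \<le> real (T n) / 2 ^ Suc n + (real n + 1) * p (real n powr \<gamma> / 2 / (real n + 1))"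
        unfolding Z2_def p_def by (rule E_cnt[OF T_bounds(1)]) simp
      also have "real n powr \<gamma> / 2 / (real n + 1) = real n powr \<gamma> / (2 * (real n + 1))" by simp
      finally show ?case using elim by simp
    qed
    have ae1: "AE w in M. (\<lambda>n. real n powr (4/3) * Z1 n w) \<longlonglongrightarrow> 0"
      by (rule AE_small[OF _ _ _ E1]) (auto simp: Z1_def cnt_meas cnt_nonneg cnt_int)
    have ae2: "AE w in M. (\<lambda>n. real n powr (4/3) * Z2 n w) \<longlonglongrightarrow> 0"
      by (rule AE_small[OF _ _ _ E2]) (auto simp: Z2_def cnt_meas cnt_nonneg cnt_int)
    let ?r1 = "\<lambda>n w. real_cond_exp M Fsig
          (indicator {\<omega>'\<in>space M. nrm (X (UU (T (n+1)) \<omega>') \<omega>') > real n powr \<gamma>}) w"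
    let ?r2 = "\<lambda>n w. real_cond_exp M Fsig
          (indicator {\<omega>'\<in>space M.
             nrm (X (UU (T n) \<omega>') \<omega>' + (if R n \<omega>' then Dt n \<omega>' else 0)) > real n powr \<gamma>}) w"
    have aeA: "AE w in M. \<forall>n. 0 \<le> ?r1 n w \<and> ?r1 n w \<le> Z1 n w"
      unfolding AE_all_countable Z1_def by (intro allI claimA T_bounds(1))
    have aeB: "AE w in M. \<forall>n. 1 \<le> n \<longrightarrow> 0 \<le> ?r2 n w \<and> ?r2 n w \<le> Z2 n w + p (real n powr \<gamma> / 2)"
      unfolding AE_all_countable
    proof
      fix n
      show "AE w in M. 1 \<le> n \<longrightarrow> 0 \<le> ?r2 n w \<and> ?r2 n w \<le> Z2 n w + p (real n powr \<gamma> / 2)"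
      proof (cases "1 \<le> n")
        case True
        show ?thesis using claimB[OF T_bounds(1) True, of "real n powr \<gamma>"]
          unfolding Z2_def p_def by simp
      qed simp
    qed
    have Q: "(\<lambda>n. real n powr (4/3) * p (real n powr \<gamma> / 2)) \<longlonglongrightarrow> 0"
      by (rule Qlim[OF tailp pnn b C g gb])
    show "AE \<omega> in M. (\<lambda>n. ?r1 n \<omega>) \<in> o(\<lambda>n. real n powr (-4/3)) \<and> (\<lambda>n. ?r2 n \<omega>) \<in> o(\<lambda>n. real n powr (-4/3))"
      using ae1 ae2 aeA aeB
    proof eventually_elim
      case (elim w)
      have o1: "(\<lambda>n. real n powr (4/3) * ?r1 n w) \<longlonglongrightarrow> 0"
      proof (rule tendsto_sandwich[OF _ _ tendsto_const elim(1)])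
        show "eventually (\<lambda>n. 0 \<le> real n powr (4/3) * ?r1 n w) sequentially"
          using elim(3) by simp
        show "eventually (\<lambda>n. real n powr (4/3) * ?r1 n w \<le> real n powr (4/3) * Z1 n w) sequentially"
          using elim(3) by (simp add: mult_left_mono)
      qed
      have lim2: "(\<lambda>n. real n powr (4/3) * Z2 n w + real n powr (4/3) * p (real n powr \<gamma> / 2)) \<longlonglongrightarrow> 0"
        using tendsto_add[OF elim(2) Q] by simp
      have o2: "(\<lambda>n. real n powr (4/3) * ?r2 n w) \<longlonglongrightarrow> 0"
      proof (rule tendsto_sandwich[OF _ _ tendsto_const lim2])
        show "eventually (\<lambda>n. 0 \<le> real n powr (4/3) * ?r2 n w) sequentially"
          by (rule eventually_sequentiallyI[of 1]) (use elim(4) in simp)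
        show "eventually (\<lambda>n. real n powr (4/3) * ?r2 n w \<le> real n powr (4/3) * Z2 n w + real n powr (4/3) * p (real n powr \<gamma> / 2)) sequentially"
        proof (rule eventually_sequentiallyI[of 1])
          fix n :: nat assume n1: "1 \<le> n"
          have "?r2 n w \<le> Z2 n w + p (real n powr \<gamma> / 2)" using elim(4) n1 by blast
          then have "real n powr (4/3) * ?r2 n w \<le> real n powr (4/3) * (Z2 n w + p (real n powr \<gamma> / 2))"
            by (intro mult_left_mono) auto
          then show "real n powr (4/3) * ?r2 n w \<le> real n powr (4/3) * Z2 n w + real n powr (4/3) * p (real n powr \<gamma> / 2)"
            by (simp add: distrib_left)
        qed
      qed
      show ?case using o_of_tendsto[OF o1] o_of_tendsto[OF o2] by simp
    qed
  qed
qed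

end

theorem lemma2:
  fixes M :: "'m measure"
    and nrm :: "'a::euclidean_space \<Rightarrow> real"
    and Delta :: "nat \<Rightarrow> 'm \<Rightarrow> 'a"
    and U :: "nat \<Rightarrow> 'm \<Rightarrow> nat"
    and X :: "nat \<Rightarrow> 'm \<Rightarrow> 'a"
    and R :: "nat \<Rightarrow> 'm \<Rightarrow> bool"
    and Dt :: "nat \<Rightarrow> 'm \<Rightarrow> 'a"
    and UU :: "nat \<Rightarrow> 'm \<Rightarrow> nat"
  assumes P: "prob_space M"
    \<comment> \<open>an arbitrary norm on R^d\<close>
    and nrm_zero: "\<And>x. nrm x = 0 \<longleftrightarrow> x = 0"
    and nrm_triangle: "\<And>x y. nrm (x + y) \<le> nrm x + nrm y"
    and nrm_scale: "\<And>c x. nrm (c *\<^sub>R x) = \<bar>c\<bar> * nrm x"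
    \<comment> \<open>measurability of the primitive random variables\<close>
    and Delta_meas: "\<And>i. Delta i \<in> borel_measurable M"
    and U_meas: "\<And>i. U i \<in> measurable M (count_space UNIV)"
    and R_meas: "\<And>n. R n \<in> measurable M (count_space UNIV)"
    and Dt_meas: "\<And>n. Dt n \<in> borel_measurable M"
    and UU_meas: "\<And>n. UU n \<in> measurable M (count_space UNIV)"
    \<comment> \<open>distributions\<close>
    and Delta_iid: "\<And>i. 1 \<le> i \<Longrightarrow> distr M borel (Delta i) = distr M borel (Delta 1)"
    and Dt_dist: "\<And>n. 1 \<le> n \<Longrightarrow> distr M borel (Dt n) = distr M borel (Delta 1)"
    and U_dist: "\<And>n. 2 \<le> n \<Longrightarrow>
        distr M (count_space UNIV) (U n) = measure_pmf (pmf_of_set {1..n-1})"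
    and U_range: "\<And>n \<omega>. 2 \<le> n \<Longrightarrow> \<omega> \<in> space M \<Longrightarrow> U n \<omega> \<in> {1..n-1}"
    and R_dist: "\<And>n. 1 \<le> n \<Longrightarrow> distr M (count_space UNIV) (R n) =
        measure_pmf (bernoulli_pmf ((real (T (n+1)) - real (T n)) / real (T (n+1))))"
    and UU_dist: "\<And>n. 1 \<le> n \<Longrightarrow>
        distr M (count_space UNIV) (UU n) = measure_pmf (pmf_of_set {1..n})"
    \<comment> \<open>mutual independence of all primitive random variables\<close>
    and indep: "prob_space.indep_sets M
        (\<lambda>i. case i of
            IDelta k \<Rightarrow> events_of M borel (Delta k)
          | IU k \<Rightarrow> events_of M (count_space UNIV) (U k)
          | IR k \<Rightarrow> events_of M (count_space UNIV) (R k)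
          | IDt k \<Rightarrow> events_of M borel (Dt k)
          | IUU k \<Rightarrow> events_of M (count_space UNIV) (UU k))
        {i. valid_idx i}"
    \<comment> \<open>the recursive definition of X\<close>
    and X1: "\<And>\<omega>. \<omega> \<in> space M \<Longrightarrow> X 1 \<omega> = Delta 1 \<omega>"
    and Xn: "\<And>n \<omega>. 2 \<le> n \<Longrightarrow> \<omega> \<in> space M \<Longrightarrow> X n \<omega> = X (U n \<omega>) \<omega> + Delta n \<omega>"
    \<comment> \<open>standing assumption: n^(-alpha) (Delta_1+...+Delta_n) converges in distribution
        to some random variable Lambda (with law L)\<close>
    and conv: "\<exists>\<alpha>>0. \<exists>L :: 'a measure. prob_space L \<and> sets L = sets borel \<and>
        (\<forall>f :: 'a \<Rightarrow> real. continuous_on UNIV f \<and> bounded (range f) \<longrightarrow>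
          (\<lambda>n. \<integral>\<omega>. f ((real n powr (-\<alpha>)) *\<^sub>R (\<Sum>i=1..n. Delta i \<omega>)) \<partial>M)
            \<longlonglongrightarrow> (\<integral>x. f x \<partial>L))"
  shows "\<exists>\<gamma>0. \<forall>\<gamma>\<ge>\<gamma>0.
    (let F = sigma (space M)
           ({X i -` A \<inter> space M | i A. 1 \<le> i \<and> A \<in> sets borel} \<union>
            {U i -` A \<inter> space M | i A. 2 \<le> i \<and> A \<in> sets (count_space UNIV)})
     in AE \<omega> in M.
       (\<lambda>n. real_cond_exp M F
          (indicator {\<omega>'\<in>space M. nrm (X (UU (T (n+1)) \<omega>') \<omega>') > real n powr \<gamma>}) \<omega>)
         \<in> o(\<lambda>n. real n powr (-4/3)) \<and>
       (\<lambda>n. real_cond_exp M F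
          (indicator {\<omega>'\<in>space M.
             nrm (X (UU (T n) \<omega>') \<omega>' + (if R n \<omega>' then Dt n \<omega>' else 0)) > real n powr \<gamma>}) \<omega>)
         \<in> o(\<lambda>n. real n powr (-4/3)))"
  proof -
  interpret LS M nrm Delta U X R Dt UU
    by (rule LS.intro[OF P], rule LS_axioms.intro, fact nrm_zero, fact nrm_triangle, fact nrm_scale,
        fact Delta_meas, fact U_meas, fact R_meas, fact Dt_meas, fact UU_meas, fact Delta_iid,
        fact Dt_dist, fact U_dist, fact U_range, fact UU_dist, fact indep, fact X1, fact Xn)
  have "\<exists>\<gamma>0. \<forall>\<gamma>\<ge>\<gamma>0. AE \<omega> in M.
       (\<lambda>n. real_cond_exp M Fsig
          (indicator {\<omega>'\<in>space M. nrm (X (UU (T (n+1)) \<omega>') \<omega>') > real n powr \<gamma>}) \<omega>)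
         \<in> o(\<lambda>n. real n powr (-4/3)) \<and>
       (\<lambda>n. real_cond_exp M Fsig
          (indicator {\<omega>'\<in>space M.
             nrm (X (UU (T n) \<omega>') \<omega>' + (if R n \<omega>' then Dt n \<omega>' else 0)) > real n powr \<gamma>}) \<omega>)
         \<in> o(\<lambda>n. real n powr (-4/3))"
    by (rule main[OF conv])
  then show ?thesis by (simp only: Let_def Fsig_def)
qed

end
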